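(* Let $K$ be a field, $\alpha$ an ordinal and $0<n<\omega$. Then $B_{\alpha,n}\in\mathfrak R_K$, $B_{\alpha,n}$ has Loewy length $\alpha+1$ and top layer dimension $n$. Moreover, if $\alpha$ is countable, then $B_{\alpha,n}$ is of countable type.
   Context: Socle sequence: $S_0=0$, $S_{\alpha+1}/S_\alpha=\mathrm{Soc}(R/S_\alpha)$, unions at limits; semiartinian of Loewy length $\sigma+1$ means $S_{\sigma+1}=R\ne S_\sigma$; layers $L_\alpha=S_{\alpha+1}/S_\alpha$. $K^{(\lambda)}$ is the direct sum of $\lambda$ copies of $K$ as a $K$-algebra without unit. $\mathfrak R_K$ is the class of commutative von Neumann regular semiartinian $K$-algebras $R$ of Loewy length $\sigma+1$ such that for each $\alpha\le\sigma$ there is a cardinal $\lambda_\alpha>0$ and a $K$-linear isomorphism of $K$-algebras without unit $L_\alpha\cong K^{(\lambda_\alpha)}$; $\lambda_\sigma$ (finite) is the top layer dimension; $R$ is of countable type if $\sigma$ and all $\lambda_\alpha$ are countable. For a sequence $\mathcal R=(R_i\mid i\in A)$ of $K$-algebras indexed by an infinite set $A$, $R(A,K,\mathcal R)$ is the $K$-subalgebra $\bigoplus_{i\in A}R_i\oplus 1_P\cdot K$ of $P=\prod_{i\in A}R_i$. $\boxplus$ is ring direct product. Define $B_{0,1}=K$; $B_{\beta+1,1}=R(\aleph_0,K,\mathcal R)$ with $\mathcal R$ the constant sequence $R_m=B_{\beta,1}$ ($m<\aleph_0$); for limit $\alpha$, $B_{\alpha,1}=R(\alpha,K,(B_{\beta,1}\mid\beta<\alpha))$;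 and $B_{\alpha,n}=B_{\alpha,1}\boxplus\cdots\boxplus B_{\alpha,1}$ ($n$ copies). *)

theory Defs
  imports "HOL-Algebra.QuotRing" "HOL-Library.Countable_Set"
begin

text \<open>Ordinals are elements of a well-ordered type 'o; the ordinal beta is the
order type of the initial segment below beta.  gamma is the immediate predecessor of beta.\<close>

definition is_pred :: "'o::wellorder \<Rightarrow> 'o \<Rightarrow> bool" where
  "is_pred \<gamma> \<beta> \<longleftrightarrow> \<gamma> < \<beta> \<and> (\<forall>\<delta>. \<gamma> < \<delta> \<longrightarrow> \<beta> \<le> \<delta>)"

definition countable_ord :: "'o::wellorder \<Rightarrow> bool" where
  "countable_ord \<beta> \<longleftrightarrow> countable {\<gamma>. \<gamma> < \<beta>}"

definition kalg :: "('a,'m) ring_scheme \<Rightarrow> ('k::field \<Rightarrow> 'a \<Rightarrow> 'a) \<Rightarrow> bool" where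
  "kalg R sm \<longleftrightarrow> cring R \<and>
     (\<forall>c. \<forall>x\<in>carrier R. sm c x \<in> carrier R) \<and>
     (\<forall>c. \<forall>x\<in>carrier R. \<forall>y\<in>carrier R. sm c (x \<oplus>\<^bsub>R\<^esub> y) = sm c x \<oplus>\<^bsub>R\<^esub> sm c y) \<and>
     (\<forall>c d. \<forall>x\<in>carrier R. sm (c + d) x = sm c x \<oplus>\<^bsub>R\<^esub> sm d x) \<and>
     (\<forall>c d. \<forall>x\<in>carrier R. sm (c * d) x = sm c (sm d x)) \<and>
     (\<forall>x\<in>carrier R. sm 1 x = x) \<and>
     (\<forall>c. \<forall>x\<in>carrier R. \<forall>y\<in>carrier R. sm c (x \<otimes>\<^bsub>R\<^esub> y) = sm c x \<otimes>\<^bsub>R\<^esub> y)"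

definition vn_regular :: "('a,'m) ring_scheme \<Rightarrow> bool" where
  "vn_regular R \<longleftrightarrow> (\<forall>a\<in>carrier R. \<exists>x\<in>carrier R. a = a \<otimes>\<^bsub>R\<^esub> x \<otimes>\<^bsub>R\<^esub> a)"

text \<open>Minimal (nonzero) ideals; the socle of a commutative ring is the sum of its
minimal ideals (= sum of its simple submodules).\<close>
definition min_ideal :: "('a,'m) ring_scheme \<Rightarrow> 'a set \<Rightarrow> bool" where
  "min_ideal Q J \<longleftrightarrow> ideal J Q \<and> J \<noteq> {\<zero>\<^bsub>Q\<^esub>} \<and>
     (\<forall>J'. ideal J' Q \<and> J' \<subseteq> J \<longrightarrow> J' = {\<zero>\<^bsub>Q\<^esub>} \<or> J' = J)"

definition socle :: "('a,'m) ring_scheme \<Rightarrow> 'a set" where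
  "socle Q = genideal Q (\<Union>{J. min_ideal Q J})"

text \<open>Given the ideal I = S_alpha, the ideal S_(alpha+1) with S_(alpha+1)/S_alpha = Soc(R/S_alpha):
the union of the cosets lying in Soc(R/I).\<close>
definition socle_step :: "('a,'m) ring_scheme \<Rightarrow> 'a set \<Rightarrow> 'a set" where
  "socle_step R I = \<Union> (socle (R Quot I))"

definition soc_seq :: "('a,'m) ring_scheme \<Rightarrow> 'o::wellorder \<Rightarrow> 'a set" where
  "soc_seq R = wfrec {(x, y). x < y}
     (\<lambda>rec \<beta>. if \<exists>\<gamma>. \<gamma> < \<beta> then
                 (if \<exists>\<gamma>. is_pred \<gamma> \<beta> then socle_step R (rec (THE \<gamma>. is_pred \<gamma> \<beta>))
                  else \<Union> (rec ` {\<gamma>. \<gamma> < \<beta>}))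
               else {\<zero>\<^bsub>R\<^esub>})"

definition loewy_length_succ :: "('a,'m) ring_scheme \<Rightarrow> 'o::wellorder \<Rightarrow> bool" where
  "loewy_length_succ R \<sigma> \<longleftrightarrow>
     socle_step R (soc_seq R \<sigma>) = carrier R \<and> soc_seq R \<sigma> \<noteq> carrier R"

definition finsupp :: "'i set \<Rightarrow> ('i \<Rightarrow> 'k::zero) set" where
  "finsupp \<Lambda> = {g. finite {i. g i \<noteq> 0} \<and> (\<forall>i. i \<notin> \<Lambda> \<longrightarrow> g i = 0)}"

text \<open>The layer L_beta = S_(beta+1)/S_beta (cosets, with the operations induced by
representatives) is K-linearly isomorphic, as K-algebra without unit, to K^(Lambda).\<close>
definition layer_iso :: "('a,'m) ring_scheme \<Rightarrow> ('k::field \<Rightarrow> 'a \<Rightarrow> 'a) \<Rightarrow> 'o::wellorder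
                          \<Rightarrow> 'a set \<Rightarrow> bool" where
  "layer_iso R sm \<beta> \<Lambda> \<longleftrightarrow>
    (let S = soc_seq R \<beta>; T = socle_step R S; L = (\<lambda>x. S +>\<^bsub>R\<^esub> x) ` T in
     \<exists>\<phi> :: 'a set \<Rightarrow> ('a \<Rightarrow> 'k).
       bij_betw \<phi> L (finsupp \<Lambda>) \<and>
       (\<forall>x\<in>T. \<forall>y\<in>T. \<phi> (S +>\<^bsub>R\<^esub> (x \<oplus>\<^bsub>R\<^esub> y)) = (\<lambda>i. \<phi> (S +>\<^bsub>R\<^esub> x) i + \<phi> (S +>\<^bsub>R\<^esub> y) i)) \<and>
       (\<forall>x\<in>T. \<forall>y\<in>T. \<phi> (S +>\<^bsub>R\<^esub> (x \<otimes>\<^bsub>R\<^esub> y)) = (\<lambda>i. \<phi> (S +>\<^bsub>R\<^esub> x) i * \<phi> (S +>\<^bsub>R\<^esub> y) i)) \<and>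
       (\<forall>c. \<forall>x\<in>T. \<phi> (S +>\<^bsub>R\<^esub> (sm c x)) = (\<lambda>i. c * \<phi> (S +>\<^bsub>R\<^esub> x) i)))"

definition in_RK :: "('a,'m) ring_scheme \<Rightarrow> ('k::field \<Rightarrow> 'a \<Rightarrow> 'a) \<Rightarrow> 'o::wellorder \<Rightarrow> bool" where
  "in_RK R sm \<sigma> \<longleftrightarrow> kalg R sm \<and> vn_regular R \<and> loewy_length_succ R \<sigma> \<and>
     (\<forall>\<beta>\<le>\<sigma>. \<exists>\<Lambda>. \<Lambda> \<noteq> {} \<and> layer_iso R sm \<beta> \<Lambda>)"

definition top_layer_dim :: "('a,'m) ring_scheme \<Rightarrow> ('k::field \<Rightarrow> 'a \<Rightarrow> 'a) \<Rightarrow> 'o::wellorder \<Rightarrow> nat \<Rightarrow> bool" where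
  "top_layer_dim R sm \<sigma> n \<longleftrightarrow> (\<exists>\<Lambda>. finite \<Lambda> \<and> card \<Lambda> = n \<and> layer_iso R sm \<sigma> \<Lambda>)"

definition countable_type :: "('a,'m) ring_scheme \<Rightarrow> ('k::field \<Rightarrow> 'a \<Rightarrow> 'a) \<Rightarrow> 'o::wellorder \<Rightarrow> bool" where
  "countable_type R sm \<sigma> \<longleftrightarrow> countable_ord \<sigma> \<and>
     (\<forall>\<beta>\<le>\<sigma>. \<exists>\<Lambda>. countable \<Lambda> \<and> \<Lambda> \<noteq> {} \<and> layer_iso R sm \<beta> \<Lambda>)"

text \<open>Concrete model: an algebra is a set of K-valued functions on a set of "points"
(lists of indices), vanishing off the points, with pointwise operations.  The product
of algebras (R_i) is realized on the points i#p, p a point of R_i.\<close>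

type_synonym 'o pt = "(nat + 'o) list"
type_synonym ('o,'k) falg = "'o pt set \<times> ('o pt \<Rightarrow> 'k) set"

text \<open>R(A,K,(R_i)) = (direct sum of R_i) + K 1_P inside the product P.\<close>
definition Rcons :: "(nat + 'o) set \<Rightarrow> ((nat + 'o) \<Rightarrow> ('o,'k::field) falg) \<Rightarrow> ('o,'k) falg" where
  "Rcons A Rs =
    ({i # p | i p. i \<in> A \<and> p \<in> fst (Rs i)},
     {f. \<exists>c F. finite F \<and> F \<subseteq> A \<and>
          (\<forall>i\<in>A. (\<lambda>p. f (i # p)) \<in> snd (Rs i) \<and>
                  (i \<notin> F \<longrightarrow> (\<forall>p. f (i # p) = (if p \<in> fst (Rs i) then c else 0)))) \<and>
          (\<forall>q. q \<notin> {i # p | i p. i \<in> A \<and> p \<in> fst (Rs i)} \<longrightarrow> f q = 0)})"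

definition Balg1 :: "'o::wellorder \<Rightarrow> ('o,'k::field) falg" where
  "Balg1 = wfrec {(x, y). x < y}
     (\<lambda>rec \<alpha>. if \<not> (\<exists>\<gamma>. \<gamma> < \<alpha>) then ({[]}, {(\<lambda>p. if p = [] then c else 0) | c. True})
             else if \<exists>\<gamma>. is_pred \<gamma> \<alpha> then Rcons (range Inl) (\<lambda>i. rec (THE \<gamma>. is_pred \<gamma> \<alpha>))
             else Rcons (Inr ` {\<beta>. \<beta> < \<alpha>}) (\<lambda>i. rec (projr i)))"

definition Balgn :: "'o::wellorder \<Rightarrow> nat \<Rightarrow> ('o,'k::field) falg" where
  "Balgn \<alpha> n = (let B = (Balg1 \<alpha> :: ('o,'k) falg) in
    ({Inl k # p | k p. k < n \<and> p \<in> fst B},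
     {f. (\<forall>k<n. (\<lambda>p. f (Inl k # p)) \<in> snd B) \<and>
         (\<forall>q. q \<notin> {Inl k # p | k p. k < n \<and> p \<in> fst B} \<longrightarrow> f q = 0)}))"

definition falg_ring :: "('o,'k::field) falg \<Rightarrow> ('o pt \<Rightarrow> 'k) ring" where
  "falg_ring A = \<lparr>carrier = snd A, mult = (\<lambda>f g p. f p * g p),
                  one = (\<lambda>p. if p \<in> fst A then 1 else 0),
                  zero = (\<lambda>p. 0), add = (\<lambda>f g p. f p + g p)\<rparr>"

definition falg_smult :: "'k::field \<Rightarrow> ('o pt \<Rightarrow> 'k) \<Rightarrow> ('o pt \<Rightarrow> 'k)" where
  "falg_smult c f = (\<lambda>p. c * f p)"

definition B_ring :: "'o::wellorder \<Rightarrow> nat \<Rightarrow> ('o pt \<Rightarrow> 'k::field) ring" where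
  "B_ring \<alpha> n = falg_ring (Balgn \<alpha> n)"

end

theory Submission
  imports Defs
begin

lemma wfo: "wf {(x, y). x < (y::'o::wellorder)}" by (rule wf)

lemma pred_unique: "is_pred a b \<Longrightarrow> is_pred c b \<Longrightarrow> a = c"
  unfolding is_pred_def by (metis leD linorder_neqE)

lemma the_pred: "is_pred a b \<Longrightarrow> (THE g. is_pred g b) = a"
  using pred_unique by blast

lemma soc_seq_unfold: "soc_seq R (\<beta>::'o::wellorder) =
  (if \<exists>\<gamma>. \<gamma> < \<beta> then
     (if \<exists>\<gamma>. is_pred \<gamma> \<beta> then socle_step R (soc_seq R (THE \<gamma>. is_pred \<gamma> \<beta>))
      else \<Union> (soc_seq R ` {\<gamma>. \<gamma> < \<beta>}))
   else {\<zero>\<^bsub>R\<^esub>})"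
proof -
  have pl: "is_pred g \<beta> \<Longrightarrow> (THE \<gamma>. is_pred \<gamma> \<beta>) < \<beta>" for g
    using the_pred[of g \<beta>] by (simp add: is_pred_def)
  have e: "soc_seq R \<beta> = (\<lambda>rec \<beta>. if \<exists>\<gamma>. \<gamma> < \<beta> then
                 (if \<exists>\<gamma>. is_pred \<gamma> \<beta> then socle_step R (rec (THE \<gamma>. is_pred \<gamma> \<beta>))
                  else \<Union> (rec ` {\<gamma>. \<gamma> < \<beta>}))
               else {\<zero>\<^bsub>R\<^esub>}) (cut (soc_seq R) {(x, y). x < y} \<beta>) \<beta>"
    unfolding soc_seq_def by (rule wfrec[OF wfo])
  have i: "cut (soc_seq R) {(x, y). x < y} \<beta> ` {\<gamma>. \<gamma> < \<beta>} = soc_seq R ` {\<gamma>. \<gamma> < \<beta>}"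
    by (auto simp: cut_def image_def)
  show ?thesis using e pl by (auto simp: i cut_def)
qed


definition isz :: "'o::wellorder \<Rightarrow> bool" where "isz b \<longleftrightarrow> \<not> (\<exists>g. g < b)"

definition child :: "'o::wellorder \<Rightarrow> nat + 'o \<Rightarrow> 'o option" where
  "child a i = (if \<exists>g. is_pred g a then (if isl i then Some (THE g. is_pred g a) else None)
     else if \<not> isz a \<and> \<not> isl i \<and> projr i < a then Some (projr i) else None)"

fun nd :: "'o::wellorder \<Rightarrow> (nat + 'o) list \<Rightarrow> 'o option" where
  "nd a [] = Some a"
| "nd a (i # q) = (case child a i of None \<Rightarrow> None | Some b \<Rightarrow> nd b q)"

definition ptsA :: "'o::wellorder \<Rightarrow> 'o pt set" where
  "ptsA a = {q. \<exists>b. nd a q = Some b \<and> isz b}"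

definition devA :: "'o::wellorder \<Rightarrow> ('o pt \<Rightarrow> 'k::zero) \<Rightarrow> 'o pt \<Rightarrow> 'k \<Rightarrow> (nat + 'o) set" where
  "devA a f q c = {i. \<exists>p. q @ i # p \<in> ptsA a \<and> f (q @ i # p) \<noteq> c}"

definition charA :: "'o::wellorder \<Rightarrow> ('o pt \<Rightarrow> 'k::zero) set" where
  "charA a = {f. (\<forall>q. q \<notin> ptsA a \<longrightarrow> f q = 0) \<and>
      (\<forall>q b. nd a q = Some b \<and> \<not> isz b \<longrightarrow> (\<exists>c. finite (devA a f q c)))}"

lemma child_less: "child a i = Some b \<Longrightarrow> b < a"
  unfolding child_def using the_pred
  by (auto split: if_splits simp: is_pred_def)

lemma child_isz: "isz a \<Longrightarrow> child a i = None"
  unfolding child_def isz_def is_pred_def by auto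

lemma nd_Cons: "nd a (i # q) = Some d \<longleftrightarrow> (\<exists>b. child a i = Some b \<and> nd b q = Some d)"
  by (auto split: option.splits)

lemma nd_le: "nd a q = Some b \<Longrightarrow> b \<le> a"
proof (induction q arbitrary: a)
  case Nil thus ?case by simp
next
  case (Cons i q)
  then obtain c where "child a i = Some c" "nd c q = Some b" by (auto split: option.splits)
  with Cons.IH child_less[of a i c] show ?case by fastforce
qed

lemma nd_less: "nd a (i # q) = Some b \<Longrightarrow> b < a"
  using nd_le child_less by (fastforce split: option.splits)

lemma nd_append: "nd a (q @ r) = (case nd a q of None \<Rightarrow> None | Some b \<Rightarrow> nd b r)"
  by (induction q arbitrary: a) (auto split: option.splits)

lemma ptsA_Nil: "([] \<in> ptsA a) = isz a"
  unfolding ptsA_def by simp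

lemma ptsA_Cons: "child a i = Some b \<Longrightarrow> (i # p \<in> ptsA a) = (p \<in> ptsA b)"
  unfolding ptsA_def by simp

lemma ptsA_Cons_None: "child a i = None \<Longrightarrow> i # p \<notin> ptsA a"
  unfolding ptsA_def by simp

lemma ptsA_isz: "isz a \<Longrightarrow> ptsA a = {[]}"
  unfolding ptsA_def by (auto simp: child_isz nd_Cons elim: nd.elims)

lemma devA_Cons: "child a i = Some b \<Longrightarrow> devA a f (i # q) c = devA b (\<lambda>p. f (i # p)) q c"
  unfolding devA_def by (simp add: ptsA_Cons)

lemma Rcons_cong: "(\<And>i. i \<in> A \<Longrightarrow> Rs i = Rs' i) \<Longrightarrow> Rcons A Rs = Rcons A Rs'"
proof -
  assume h: "\<And>i. i \<in> A \<Longrightarrow> Rs i = Rs' i"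
  have 1: "{i # p | i p. i \<in> A \<and> p \<in> fst (Rs i)} = {i # p | i p. i \<in> A \<and> p \<in> fst (Rs' i)}"
    using h by auto
  show ?thesis unfolding Rcons_def 1 using h by (auto simp: Ball_def)
qed


lemma Rcons_char:
  fixes Rs :: "nat + 'o \<Rightarrow> ('o::wellorder, 'k::field) falg"
  assumes nz: "\<not> isz a" and A: "\<And>i. (child a i \<noteq> None) = (i \<in> A)"
    and Rs: "\<And>i. i \<in> A \<Longrightarrow> Rs i = (ptsA (the (child a i)), charA (the (child a i)))"
  shows "Rcons A Rs = (ptsA a, charA a)"
proof -
  have P: "{i # p | i p. i \<in> A \<and> p \<in> fst (Rs i)} = ptsA a"
  proof (rule Set.set_eqI, rule iffI)
    fix q assume "q \<in> {i # p | i p. i \<in> A \<and> p \<in> fst (Rs i)}"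
    then obtain i p where q: "q = i # p" "i \<in> A" "p \<in> fst (Rs i)" by blast
    then obtain b where b: "child a i = Some b" using A by blast
    with q Rs show "q \<in> ptsA a" by (simp add: ptsA_Cons)
  next
    fix q assume q: "q \<in> ptsA a"
    then obtain i p where qe: "q = i # p" using nz ptsA_Nil by (cases q) auto
    show "q \<in> {i # p | i p. i \<in> A \<and> p \<in> fst (Rs i)}"
    proof (cases "child a i")
      case None thus ?thesis using q qe ptsA_Cons_None by blast
    next
      case (Some b)
      hence "i \<in> A" using A by blast
      thus ?thesis using q qe Some Rs[of i] by (auto simp: ptsA_Cons)
    qed
  qed
  have S: "snd (Rcons A Rs) = charA a"
  proof (rule Set.set_eqI, rule iffI)
    fix f :: "'o pt \<Rightarrow> 'k" assume "f \<in> snd (Rcons A Rs)"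
    then obtain c F where F: "finite F" "F \<subseteq> A"
      and comp: "\<And>i. i \<in> A \<Longrightarrow> (\<lambda>p. f (i # p)) \<in> snd (Rs i) \<and>
                  (i \<notin> F \<longrightarrow> (\<forall>p. f (i # p) = (if p \<in> fst (Rs i) then c else 0)))"
      and van: "\<And>q. q \<notin> ptsA a \<Longrightarrow> f q = 0"
      unfolding Rcons_def P snd_conv mem_Collect_eq by blast
    show "f \<in> charA a" unfolding charA_def
    proof (intro CollectI conjI allI impI)
      fix q assume "q \<notin> ptsA a" thus "f q = 0" by (rule van)
    next
      fix q b assume qb: "nd a q = Some b \<and> \<not> isz b"
      show "\<exists>c. finite (devA a f q c)"
      proof (cases q)
        case Nil
        have "devA a f q c \<subseteq> F"
        proof
          fix i assume "i \<in> devA a f q c"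
          then obtain p where p: "i # p \<in> ptsA a" "f (i # p) \<noteq> c" using Nil by (auto simp: devA_def)
          then obtain b' where b': "child a i = Some b'" using ptsA_Cons_None by (cases "child a i") auto
          hence iA: "i \<in> A" using A by blast
          have "p \<in> fst (Rs i)" using p b' Rs[OF iA] by (simp add: ptsA_Cons)
          thus "i \<in> F" using comp[OF iA] p by auto
        qed
        thus ?thesis using F finite_subset by blast
      next
        case (Cons i q')
        then obtain b' where b': "child a i = Some b'" "nd b' q' = Some b" using qb
          by (auto split: option.splits)
        hence iA: "i \<in> A" using A by blast
        have "(\<lambda>p. f (i # p)) \<in> charA b'" using comp[OF iA] Rs[OF iA] b' by simp
        then obtain c where "finite (devA b' (\<lambda>p. f (i # p)) q' c)"
          using b' qb unfolding charA_def by blast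
        hence "finite (devA a f (i # q') c)" using devA_Cons[OF b'(1), of f q' c] by simp
        thus ?thesis using Cons by blast
      qed
    qed
  next
    fix f :: "'o pt \<Rightarrow> 'k" assume f: "f \<in> charA a"
    then obtain c where c: "finite (devA a f [] c)" using nz unfolding charA_def by fastforce
    have van: "\<And>q. q \<notin> ptsA a \<Longrightarrow> f q = 0" using f unfolding charA_def by blast
    have FA: "devA a f [] c \<subseteq> A"
    proof
      fix i assume "i \<in> devA a f [] c"
      then obtain p where "i # p \<in> ptsA a" by (auto simp: devA_def)
      thus "i \<in> A" using A ptsA_Cons_None by blast
    qed
    have comp: "(\<lambda>p. f (i # p)) \<in> snd (Rs i) \<and>
          (i \<notin> devA a f [] c \<longrightarrow> (\<forall>p. f (i # p) = (if p \<in> fst (Rs i) then c else 0)))"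
      if iA: "i \<in> A" for i
    proof -
      obtain b where b: "child a i = Some b" using A iA by blast
      have Rsi: "Rs i = (ptsA b, charA b)" using Rs[OF iA] b by simp
      have "(\<lambda>p. f (i # p)) \<in> charA b" unfolding charA_def
      proof (intro CollectI conjI allI impI)
        fix p assume "p \<notin> ptsA b" thus "f (i # p) = 0" using van b by (simp add: ptsA_Cons)
      next
        fix q b' assume qb: "nd b q = Some b' \<and> \<not> isz b'"
        hence "nd a (i # q) = Some b' \<and> \<not> isz b'" using b by simp
        then obtain c' where "finite (devA a f (i # q) c')" using f unfolding charA_def by blast
        hence "finite (devA b (\<lambda>p. f (i # p)) q c')" using devA_Cons[OF b, of f q c'] by simp
        thus "\<exists>c. finite (devA b (\<lambda>p. f (i # p)) q c)" by blast
      qed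
      moreover have "\<forall>p. f (i # p) = (if p \<in> ptsA b then c else 0)" if "i \<notin> devA a f [] c"
      proof
        fix p show "f (i # p) = (if p \<in> ptsA b then c else 0)"
          using that van[of "i # p"] b by (auto simp: devA_def ptsA_Cons)
      qed
      ultimately show ?thesis using Rsi by simp
    qed
    show "f \<in> snd (Rcons A Rs)" unfolding Rcons_def P snd_conv
      using c FA comp van by blast
  qed
  show ?thesis using P S unfolding Rcons_def by simp
qed


lemma Balg1_unfold: "(Balg1 (a::'o::wellorder) :: ('o,'k::field) falg) =
  (if \<not> (\<exists>\<gamma>. \<gamma> < a) then ({[]}, {(\<lambda>p. if p = [] then c else 0) | c. True})
   else if \<exists>\<gamma>. is_pred \<gamma> a then Rcons (range Inl) (\<lambda>i. Balg1 (THE \<gamma>. is_pred \<gamma> a))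
   else Rcons (Inr ` {\<beta>. \<beta> < a}) (\<lambda>i. Balg1 (projr i)))"
proof -
  have pl: "is_pred g a \<Longrightarrow> (THE \<gamma>. is_pred \<gamma> a) < a" for g
    using the_pred[of g a] by (simp add: is_pred_def)
  have e: "(Balg1 a :: ('o,'k) falg) = (\<lambda>rec \<alpha>. if \<not> (\<exists>\<gamma>. \<gamma> < \<alpha>) then ({[]}, {(\<lambda>p. if p = [] then c else 0) | c. True})
             else if \<exists>\<gamma>. is_pred \<gamma> \<alpha> then Rcons (range Inl) (\<lambda>i. rec (THE \<gamma>. is_pred \<gamma> \<alpha>))
             else Rcons (Inr ` {\<beta>. \<beta> < \<alpha>}) (\<lambda>i. rec (projr i))) (cut Balg1 {(x, y). x < y} a) a"
    unfolding Balg1_def by (rule wfrec[OF wfo])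
  have r: "Rcons (Inr ` {\<beta>. \<beta> < a}) (\<lambda>i. cut Balg1 {(x, y). x < y} a (projr i)) =
           (Rcons (Inr ` {\<beta>. \<beta> < a}) (\<lambda>i. Balg1 (projr i)) :: ('o,'k) falg)"
    by (rule Rcons_cong) (auto simp: cut_def)
  show ?thesis using e pl r by (auto simp: cut_def)
qed

lemma Balg1_char: "(Balg1 (a::'o::wellorder) :: ('o,'k::field) falg) = (ptsA a, charA a)"
proof (induction a rule: less_induct)
  case (less a)
  show ?case
  proof (cases "isz a")
    case True
    have P: "ptsA a = {[]}" using True by (rule ptsA_isz)
    have nd0: "nd a q = Some b \<Longrightarrow> q = []" for q b
      using True by (cases q) (auto simp: child_isz)
    have C: "(charA a :: ('o pt \<Rightarrow> 'k) set) = {(\<lambda>p. if p = [] then c else 0) | c. True}"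
    proof (rule Set.set_eqI, rule iffI)
      fix f :: "'o pt \<Rightarrow> 'k" assume "f \<in> charA a"
      hence "\<forall>q. q \<noteq> [] \<longrightarrow> f q = 0" unfolding charA_def P by auto
      hence "f = (\<lambda>p. if p = [] then f [] else 0)" by auto
      thus "f \<in> {(\<lambda>p. if p = [] then c else 0) | c. True}" by blast
    next
      fix f :: "'o pt \<Rightarrow> 'k" assume "f \<in> {(\<lambda>p. if p = [] then c else 0) | c. True}"
      thus "f \<in> charA a" unfolding charA_def P using nd0 True by fastforce
    qed
    show ?thesis using True P C by (subst Balg1_unfold) (simp add: isz_def)
  next
    case False
    show ?thesis
    proof (cases "\<exists>g. is_pred g a")
      case True
      then obtain g where g: "is_pred g a" by blast
      have th: "(THE \<gamma>. is_pred \<gamma> a) = g" using the_pred[OF g] .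
      have ch: "child a i = (if isl i then Some g else None)" for i
        unfolding child_def using True th by simp
      have "Rcons (range Inl) (\<lambda>i. Balg1 g) = (ptsA a, charA a :: ('o pt \<Rightarrow> 'k) set)"
      proof (rule Rcons_char[OF False])
        show "(child a i \<noteq> None) = (i \<in> range Inl)" for i
          by (cases i) (auto simp: ch)
        show "i \<in> range Inl \<Longrightarrow> (Balg1 g :: ('o,'k) falg) = (ptsA (the (child a i)), charA (the (child a i)))" for i
          using less[of g] g by (auto simp: ch is_pred_def)
      qed
      thus ?thesis using False True th by (subst Balg1_unfold) (simp add: isz_def)
    next
      case np: False
      have ch: "child a i = (if \<not> isl i \<and> projr i < a then Some (projr i) else None)" for i
        unfolding child_def using np False by simp
      have "Rcons (Inr ` {\<beta>. \<beta> < a}) (\<lambda>i. Balg1 (projr i)) = (ptsA a, charA a :: ('o pt \<Rightarrow> 'k) set)"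
      proof (rule Rcons_char[OF False])
        show "(child a i \<noteq> None) = (i \<in> Inr ` {\<beta>. \<beta> < a})" for i
          by (cases i) (auto simp: ch)
        show "i \<in> Inr ` {\<beta>. \<beta> < a} \<Longrightarrow> (Balg1 (projr i) :: ('o,'k) falg) = (ptsA (the (child a i)), charA (the (child a i)))" for i
          using less by (auto simp: ch)
      qed
      thus ?thesis using False np by (subst Balg1_unfold) (simp add: isz_def)
    qed
  qed
qed


lemma falg_cring:
  fixes A :: "('o,'k::field) falg"
  assumes z: "(\<lambda>p. 0) \<in> snd A" and o: "(\<lambda>p. if p \<in> fst A then 1 else 0) \<in> snd A"
    and ad: "\<And>f g. f \<in> snd A \<Longrightarrow> g \<in> snd A \<Longrightarrow> (\<lambda>p. f p + g p) \<in> snd A"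
    and ng: "\<And>f. f \<in> snd A \<Longrightarrow> (\<lambda>p. - f p) \<in> snd A"
    and mu: "\<And>f g. f \<in> snd A \<Longrightarrow> g \<in> snd A \<Longrightarrow> (\<lambda>p. f p * g p) \<in> snd A"
    and va: "\<And>f p. f \<in> snd A \<Longrightarrow> p \<notin> fst A \<Longrightarrow> f p = 0"
  shows "cring (falg_ring A)"
proof (rule cringI)
  show "abelian_group (falg_ring A)"
  proof (rule abelian_groupI)
    fix x assume x: "x \<in> carrier (falg_ring A)"
    show "\<exists>y\<in>carrier (falg_ring A). y \<oplus>\<^bsub>falg_ring A\<^esub> x = \<zero>\<^bsub>falg_ring A\<^esub>"
      using x ng[of x] by (intro bexI[of _ "\<lambda>p. - x p"]) (auto simp: falg_ring_def)
  qed (auto simp: falg_ring_def z ad algebra_simps)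
  show "comm_monoid (falg_ring A)"
  proof (rule comm_monoidI)
    fix x assume "x \<in> carrier (falg_ring A)"
    thus "\<one>\<^bsub>falg_ring A\<^esub> \<otimes>\<^bsub>falg_ring A\<^esub> x = x"
      using va[of x] by (auto simp: falg_ring_def fun_eq_iff)
  qed (auto simp: falg_ring_def o mu algebra_simps)
qed (auto simp: falg_ring_def algebra_simps)

lemma falg_ops:
  "carrier (falg_ring A) = snd A"
  "x \<oplus>\<^bsub>falg_ring A\<^esub> y = (\<lambda>p. x p + y p)"
  "x \<otimes>\<^bsub>falg_ring A\<^esub> y = (\<lambda>p. x p * y p)"
  "\<zero>\<^bsub>falg_ring A\<^esub> = (\<lambda>p. 0)"
  "\<one>\<^bsub>falg_ring A\<^esub> = (\<lambda>p. if p \<in> fst A then 1 else 0)"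
  by (auto simp: falg_ring_def)

lemma falg_inv:
  assumes "cring (falg_ring A)" "x \<in> snd A" "(\<lambda>p. - x p) \<in> snd A"
  shows "\<ominus>\<^bsub>falg_ring A\<^esub> x = (\<lambda>p. - x p)"
proof -
  interpret cring "falg_ring A" by fact
  show ?thesis using assms by (intro minus_equality) (auto simp: falg_ring_def)
qed

lemma falg_minus:
  assumes "cring (falg_ring A)" "x \<in> snd A" "y \<in> snd A" "(\<lambda>p. - y p) \<in> snd A"
  shows "x \<ominus>\<^bsub>falg_ring A\<^esub> y = (\<lambda>p. x p - y p)"
  using falg_inv[OF assms(1,3,4)] by (simp add: a_minus_def falg_ring_def)

lemma falg_finsum:
  assumes "cring (falg_ring A)" "finite G" "\<And>e. e \<in> G \<Longrightarrow> h e \<in> snd A"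
  shows "finsum (falg_ring A) h G = (\<lambda>p. \<Sum>e\<in>G. h e p)"
  using assms(2,3)
proof (induction G rule: finite_induct)
  case empty
  interpret cring "falg_ring A" by fact
  show ?case using finsum_empty[of h] by (simp add: falg_ring_def)
next
  case (insert x F)
  interpret cring "falg_ring A" by fact
  have "finsum (falg_ring A) h (insert x F) = h x \<oplus>\<^bsub>falg_ring A\<^esub> finsum (falg_ring A) h F"
    using insert by (intro finsum_insert) (auto simp: falg_ring_def)
  thus ?case using insert by (simp add: falg_ring_def)
qed


lemma kalg_sm0:
  fixes R (structure)
  assumes "kalg R sm" "x \<in> carrier R"
  shows "sm 0 x = \<zero>\<^bsub>R\<^esub>"
proof -
  interpret cring R using assms(1) by (simp add: kalg_def)
  have c: "sm 0 x \<in> carrier R" using assms unfolding kalg_def by blast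
  have "sm (0 + 0) x = sm 0 x \<oplus> sm 0 x" using assms unfolding kalg_def by blast
  hence "sm 0 x \<oplus> sm 0 x = sm 0 x \<oplus> \<zero>" using c by simp
  thus ?thesis using c by (metis add.l_cancel_one' zero_closed r_zero add.m_comm)
qed

lemma kalg_sm_one:
  fixes R (structure)
  assumes "kalg R sm" "x \<in> carrier R"
  shows "sm c x = sm c \<one>\<^bsub>R\<^esub> \<otimes>\<^bsub>R\<^esub> x"
proof -
  interpret cring R using assms(1) by (simp add: kalg_def)
  have "sm c (\<one> \<otimes> x) = sm c \<one> \<otimes> x" using assms unfolding kalg_def by blast
  thus ?thesis using assms by simp
qed

lemma socle_crit:
  fixes R (structure) and sm :: "'k::field \<Rightarrow> 'a \<Rightarrow> 'a"
  assumes ka: "kalg R sm" and iI: "ideal I R" and iT: "ideal T R" and IT: "I \<subseteq> T"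
    and LT: "\<Lambda> \<subseteq> T"
    and idem: "\<And>e. e \<in> \<Lambda> \<Longrightarrow> e \<otimes> e = e \<and> e \<notin> I"
    and H3: "\<And>e x. e \<in> \<Lambda> \<Longrightarrow> x \<in> carrier R \<Longrightarrow> \<exists>c. (e \<otimes> x) \<ominus> sm c e \<in> I"
    and span: "\<And>x. x \<in> T \<Longrightarrow> \<exists>G c. finite G \<and> G \<subseteq> \<Lambda> \<and> x \<ominus> finsum R (\<lambda>e. sm (c e) e) G \<in> I"
    and split: "\<And>x. x \<in> carrier R \<Longrightarrow> x \<notin> T \<Longrightarrow>
                  \<exists>z\<in>carrier R. x \<otimes> z \<notin> I \<and> x \<otimes> (\<one> \<ominus> z) \<notin> I \<and> z \<otimes> z = z"
  shows "socle_step R I = T"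
proof -
  interpret cring R using ka by (simp add: kalg_def)
  interpret I: ideal I R by fact
  interpret T: ideal T R by fact
  define Q where "Q = R Quot I"
  interpret Q: cring Q unfolding Q_def by (rule I.quotient_is_cring) (rule is_cring)
  define h where "h = (\<lambda>x. I +> x)"
  have hom: "h \<in> ring_hom R Q" unfolding h_def Q_def by (rule I.rcos_ring_hom)
  have hc: "x \<in> carrier R \<Longrightarrow> h x \<in> carrier Q" for x using hom by (rule ring_hom_closed)
  have hm: "x \<in> carrier R \<Longrightarrow> y \<in> carrier R \<Longrightarrow> h (x \<otimes> y) = h x \<otimes>\<^bsub>Q\<^esub> h y" for x y
    using hom by (rule ring_hom_mult)
  have ha: "x \<in> carrier R \<Longrightarrow> y \<in> carrier R \<Longrightarrow> h (x \<oplus> y) = h x \<oplus>\<^bsub>Q\<^esub> h y" for x y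
    using hom by (rule ring_hom_add)
  have h0: "\<zero>\<^bsub>Q\<^esub> = I" unfolding Q_def FactRing_def by simp
  have hz: "x \<in> carrier R \<Longrightarrow> (h x = \<zero>\<^bsub>Q\<^esub>) = (x \<in> I)" for x
    unfolding h0 h_def using I.a_rcos_const I.a_rcos_self by blast
  have h00: "h \<zero> = \<zero>\<^bsub>Q\<^esub>" using hz[of "\<zero>"] I.zero_closed by simp
  have cQ: "carrier Q = h ` carrier R"
    unfolding Q_def h_def FactRing_def by (auto simp: A_RCOSETS_def RCOSETS_def a_r_coset_def)
  have smc: "sm c x \<in> carrier R" if "x \<in> carrier R" for c x using ka that unfolding kalg_def by blast
  have heq: "h x = h y" if "x \<in> carrier R" "y \<in> carrier R" "x \<ominus> y \<in> I" for x y
  proof -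
    have "x = (x \<ominus> y) \<oplus> y" using that by algebra
    hence "h x = h (x \<ominus> y) \<oplus>\<^bsub>Q\<^esub> h y" using ha that by (metis minus_closed)
    also have "h (x \<ominus> y) = \<zero>\<^bsub>Q\<^esub>" using hz that by simp
    finally show ?thesis using hc that by simp
  qed
  have Tc: "T \<subseteq> carrier R" by (rule T.a_subset)
  have Lc: "\<Lambda> \<subseteq> carrier R" using LT Tc by blast
  have hTi: "ideal (h ` T) Q" unfolding h_def Q_def
    by (rule ring_ideal_imp_quot_ideal) (fact iI, fact iT)
  have minT: "M \<subseteq> h ` T" if M: "min_ideal Q M" for M
  proof
    fix m assume mM: "m \<in> M"
    interpret M: ideal M Q using M unfolding min_ideal_def by blast
    have "m \<in> carrier Q" using mM M.a_subset by blast
    then obtain x where x: "x \<in> carrier R" "m = h x" using cQ by blast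
    show "m \<in> h ` T"
    proof (cases "x \<in> T")
      case True thus ?thesis using x by blast
    next
      case False
      then obtain z where z: "z \<in> carrier R" "x \<otimes> z \<notin> I" "x \<otimes> (\<one> \<ominus> z) \<notin> I" "z \<otimes> z = z"
        using split x by blast
      define J where "J = PIdl\<^bsub>Q\<^esub> (h (x \<otimes> z))"
      have xzc: "x \<otimes> z \<in> carrier R" using x z by simp
      have Ji: "ideal J Q" unfolding J_def using hc[OF xzc] by (rule Q.cgenideal_ideal)
      have "h (x \<otimes> z) \<in> M" using hm x z mM hc M.I_r_closed by simp
      hence JM: "J \<subseteq> M" unfolding J_def by (rule Q.cgenideal_minimal[OF M.is_ideal])
      have "h (x \<otimes> z) \<in> J" unfolding J_def using hc[OF xzc] by (rule Q.cgenideal_self)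
      hence "J \<noteq> {\<zero>\<^bsub>Q\<^esub>}" using hz[OF xzc] z by auto
      hence "J = M" using M Ji JM unfolding min_ideal_def by blast
      hence "m \<in> J" using mM by simp
      then obtain y where y: "y \<in> carrier Q" "m = y \<otimes>\<^bsub>Q\<^esub> h (x \<otimes> z)"
        unfolding J_def cgenideal_def by blast
      then obtain r where r: "r \<in> carrier R" "y = h r" using cQ by blast
      have hx: "h x = h (r \<otimes> (x \<otimes> z))" using y r x xzc hm by simp
      have omz: "\<one> \<ominus> z \<in> carrier R" using z by simp
      have "h (x \<otimes> (\<one> \<ominus> z)) = h x \<otimes>\<^bsub>Q\<^esub> h (\<one> \<ominus> z)" using hm x omz by simp
      also have "\<dots> = h ((r \<otimes> (x \<otimes> z)) \<otimes> (\<one> \<ominus> z))" using hx hm r xzc omz by simp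
      also have "(r \<otimes> (x \<otimes> z)) \<otimes> (\<one> \<ominus> z) = (r \<otimes> x) \<otimes> (z \<ominus> z \<otimes> z)"
        using r x z by algebra
      also have "\<dots> = \<zero>" using z r x by (simp add: r_neg minus_eq)
      finally have "x \<otimes> (\<one> \<ominus> z) \<in> I" using hz x omz h00 by simp
      thus ?thesis using z by blast
    qed
  qed
  have UmC: "\<Union>{J. min_ideal Q J} \<subseteq> carrier Q"
    unfolding min_ideal_def using ideal.axioms(1) additive_subgroup.a_subset by blast
  have S1: "socle Q \<subseteq> h ` T"
    unfolding socle_def using minT by (intro Q.genideal_minimal[OF hTi]) blast
  have Si: "ideal (socle Q) Q" unfolding socle_def using UmC by (rule Q.genideal_ideal)
  interpret S: ideal "socle Q" Q by fact
  have mine: "min_ideal Q (PIdl\<^bsub>Q\<^esub> (h e))" if e: "e \<in> \<Lambda>" for e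
  proof -
    have ec: "e \<in> carrier R" using e Lc by blast
    have Pi: "ideal (PIdl\<^bsub>Q\<^esub> (h e)) Q" using hc[OF ec] by (rule Q.cgenideal_ideal)
    have heP: "h e \<in> PIdl\<^bsub>Q\<^esub> (h e)" using hc[OF ec] by (rule Q.cgenideal_self)
    have hne: "h e \<noteq> \<zero>\<^bsub>Q\<^esub>" using hz[OF ec] idem[OF e] by simp
    show ?thesis unfolding min_ideal_def
    proof (intro conjI allI impI)
      show "ideal (PIdl\<^bsub>Q\<^esub> (h e)) Q" by fact
      show "PIdl\<^bsub>Q\<^esub> h e \<noteq> {\<zero>\<^bsub>Q\<^esub>}" using heP hne by auto
    next
      fix J' assume J': "ideal J' Q \<and> J' \<subseteq> PIdl\<^bsub>Q\<^esub> (h e)"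
      interpret J': ideal J' Q using J' by blast
      show "J' = {\<zero>\<^bsub>Q\<^esub>} \<or> J' = PIdl\<^bsub>Q\<^esub> (h e)"
      proof (cases "J' = {\<zero>\<^bsub>Q\<^esub>}")
        case True thus ?thesis by blast
      next
        case False
        then obtain j where j: "j \<in> J'" "j \<noteq> \<zero>\<^bsub>Q\<^esub>" using J'.zero_closed by blast
        have "j \<in> PIdl\<^bsub>Q\<^esub> (h e)" using j J' by blast
        then obtain y where y: "y \<in> carrier Q" "j = y \<otimes>\<^bsub>Q\<^esub> h e" unfolding cgenideal_def by blast
        then obtain r where r: "r \<in> carrier R" "y = h r" using cQ by blast
        have jr: "j = h (e \<otimes> r)" using y r hm[OF r(1) ec] ec m_comm[OF r(1) ec] by simp
        obtain c where c: "(e \<otimes> r) \<ominus> sm c e \<in> I" using H3 e r by blast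
        have jc: "j = h (sm c e)" using jr heq[OF _ smc[OF ec] c] r ec by simp
        have cn: "c \<noteq> 0"
        proof
          assume "c = 0"
          hence "j = h \<zero>" using jc kalg_sm0[OF ka ec] by simp
          thus False using j hz by simp
        qed
        have "sm (inverse c) \<one> \<otimes> sm c e = sm (inverse c) (sm c e)"
          using kalg_sm_one[OF ka smc[OF ec]] by simp
        also have "\<dots> = sm (inverse c * c) e" using ka ec unfolding kalg_def by simp
        also have "\<dots> = e" using cn ka ec unfolding kalg_def by simp
        finally have eq: "sm (inverse c) \<one> \<otimes> sm c e = e" .
        have sc1: "sm (inverse c) \<one> \<in> carrier R" using smc one_closed by blast
        have sce: "sm c e \<in> carrier R" using smc[OF ec] .
        have "h (sm (inverse c) \<one> \<otimes> sm c e) = h (sm (inverse c) \<one>) \<otimes>\<^bsub>Q\<^esub> h (sm c e)"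
          by (rule hm[OF sc1 sce])
        hence "h e = h (sm (inverse c) \<one>) \<otimes>\<^bsub>Q\<^esub> j" using eq jc by simp
        hence heJ: "h e \<in> J'" using J'.I_l_closed[OF j(1) hc[OF sc1]] by simp
        have "PIdl\<^bsub>Q\<^esub> (h e) \<subseteq> J'" by (rule Q.cgenideal_minimal[OF J'.is_ideal heJ])
        moreover have "J' \<subseteq> PIdl\<^bsub>Q\<^esub> (h e)" using J' by (rule conjunct2)
        ultimately show ?thesis by (simp add: subset_antisym)
      qed
    qed
  qed
  have heS: "h e \<in> socle Q" if e: "e \<in> \<Lambda>" for e
  proof -
    have ec: "e \<in> carrier R" using e Lc by blast
    have "PIdl\<^bsub>Q\<^esub> (h e) \<in> {J. min_ideal Q J}" using mine[OF e] by simp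
    hence "h e \<in> \<Union>{J. min_ideal Q J}" using Q.cgenideal_self[OF hc[OF ec]] by (rule UnionI)
    thus ?thesis unfolding socle_def by (rule subsetD[OF Q.genideal_self[OF UmC]])
  qed
  have sumS: "h (finsum R (\<lambda>e. sm (c e) e) G) \<in> socle Q" if "finite G" "G \<subseteq> \<Lambda>" for G c
    using that
  proof (induction G rule: finite_induct)
    case empty
    show ?case using S.zero_closed h00 by simp
  next
    case (insert a F)
    have ac: "a \<in> carrier R" using insert Lc by blast
    have Fc: "(\<lambda>e. sm (c e) e) \<in> F \<rightarrow> carrier R" using insert Lc smc by blast
    have fs: "finsum R (\<lambda>e. sm (c e) e) (insert a F) = sm (c a) a \<oplus> finsum R (\<lambda>e. sm (c e) e) F"
      using insert Fc smc[OF ac] by (intro finsum_insert) auto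
    have sc1: "sm (c a) \<one> \<in> carrier R" using smc one_closed by blast
    have "h (sm (c a) a) = h (sm (c a) \<one>) \<otimes>\<^bsub>Q\<^esub> h a"
      using kalg_sm_one[OF ka ac] hm[OF sc1 ac] by simp
    moreover have "h a \<in> socle Q" using heS[of a] insert by simp
    ultimately have "h (sm (c a) a) \<in> socle Q" using S.I_l_closed[OF _ hc[OF sc1]] by simp
    moreover have "h (finsum R (\<lambda>e. sm (c e) e) F) \<in> socle Q" using insert by blast
    ultimately show ?case using fs ha smc[OF ac] finsum_closed[OF Fc] S.a_closed by simp
  qed
  have S2: "h ` T \<subseteq> socle Q"
  proof
    fix m assume "m \<in> h ` T"
    then obtain x where x: "x \<in> T" "m = h x" by blast
    obtain G c where G: "finite G" "G \<subseteq> \<Lambda>" "x \<ominus> finsum R (\<lambda>e. sm (c e) e) G \<in> I"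
      using span x by blast
    have Fc: "(\<lambda>e. sm (c e) e) \<in> G \<rightarrow> carrier R" using G Lc smc by blast
    have "m = h (finsum R (\<lambda>e. sm (c e) e) G)"
      using heq[OF _ finsum_closed[OF Fc] G(3)] x Tc by blast
    thus "m \<in> socle Q" using sumS G by simp
  qed
  have SQ: "socle Q = h ` T" using S1 S2 by blast
  show ?thesis
  proof -
    have "\<Union> (h ` T) = T"
    proof
      show "\<Union> (h ` T) \<subseteq> T"
      proof
        fix y assume "y \<in> \<Union> (h ` T)"
        then obtain x where x: "x \<in> T" "y \<in> I +> x" unfolding h_def by blast
        then obtain i where "i \<in> I" "y = i \<oplus> x" unfolding a_r_coset_def r_coset_def by auto
        thus "y \<in> T" using x IT T.a_closed by blast
      qed
      show "T \<subseteq> \<Union> (h ` T)"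
        using I.a_rcos_self Tc unfolding h_def by blast
    qed
    thus ?thesis unfolding socle_step_def SQ[unfolded Q_def] .
  qed
qed


lemma falg_ideal:
  fixes A :: "('o,'k::field) falg"
  assumes cr: "cring (falg_ring A)" and Js: "J \<subseteq> snd A" and z: "(\<lambda>p. 0) \<in> J"
    and ad: "\<And>f g. f \<in> J \<Longrightarrow> g \<in> J \<Longrightarrow> (\<lambda>p. f p + g p) \<in> J"
    and ng: "\<And>f. f \<in> J \<Longrightarrow> (\<lambda>p. - f p) \<in> J"
    and mu: "\<And>f g. f \<in> J \<Longrightarrow> g \<in> snd A \<Longrightarrow> (\<lambda>p. f p * g p) \<in> J"
  shows "ideal J (falg_ring A)"
proof -
  interpret cring "falg_ring A" by fact
  show ?thesis
  proof (rule idealI)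
    show "ring (falg_ring A)" using cr by (rule cring.axioms(1))
    show "subgroup J (add_monoid (falg_ring A))"
    proof (rule add.subgroupI)
      show "J \<subseteq> carrier (falg_ring A)" using Js by (simp add: falg_ring_def)
      show "J \<noteq> {}" using z by blast
      fix a assume a: "a \<in> J"
      have "\<ominus>\<^bsub>falg_ring A\<^esub> a = (\<lambda>p. - a p)" using falg_inv[OF cr] a Js ng by blast
      thus "\<ominus>\<^bsub>falg_ring A\<^esub> a \<in> J" using ng a by simp
    next
      fix a b assume "a \<in> J" "b \<in> J"
      thus "a \<oplus>\<^bsub>falg_ring A\<^esub> b \<in> J" using ad by (simp add: falg_ring_def)
    qed
    fix a x assume "a \<in> J" "x \<in> carrier (falg_ring A)"
    thus "x \<otimes>\<^bsub>falg_ring A\<^esub> a \<in> J" "a \<otimes>\<^bsub>falg_ring A\<^esub> x \<in> J"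
      using mu[of a x] by (simp_all add: falg_ring_def mult.commute)
  qed
qed


context
  fixes \<alpha> :: "'o::wellorder" and n :: nat
begin

definition ndn :: "'o pt \<Rightarrow> 'o option" where
  "ndn q = (case q of [] \<Rightarrow> None | i # q' \<Rightarrow> (if isl i \<and> projl i < n then nd \<alpha> q' else None))"

definition ptsN :: "'o pt set" where "ptsN = {q. \<exists>b. ndn q = Some b \<and> isz b}"

definition devN :: "('o pt \<Rightarrow> 'k::zero) \<Rightarrow> 'o pt \<Rightarrow> 'k \<Rightarrow> (nat + 'o) set" where
  "devN f q c = {i. \<exists>p. q @ i # p \<in> ptsN \<and> f (q @ i # p) \<noteq> c}"

definition carN :: "('o pt \<Rightarrow> 'k::zero) set" where
  "carN = {f. (\<forall>q. q \<notin> ptsN \<longrightarrow> f q = 0) \<and>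
              (\<forall>q b. ndn q = Some b \<and> \<not> isz b \<longrightarrow> (\<exists>c. finite (devN f q c)))}"

lemma ndn_Nil[simp]: "ndn [] = None" by (simp add: ndn_def)

lemma ndn_Inl: "ndn (Inl k # q) = (if k < n then nd \<alpha> q else None)" by (simp add: ndn_def)

lemma ndn_Cons_Some: "ndn (i # q) = Some b \<Longrightarrow> \<exists>k. i = Inl k \<and> k < n \<and> nd \<alpha> q = Some b"
  by (cases i) (auto simp: ndn_def split: if_splits)

lemma ptsN_Inl: "(Inl k # p \<in> ptsN) = (k < n \<and> p \<in> ptsA \<alpha>)"
  by (auto simp: ptsN_def ptsA_def ndn_Inl)

lemma ptsN_cases: "q \<in> ptsN \<Longrightarrow> \<exists>k p. q = Inl k # p \<and> k < n \<and> p \<in> ptsA \<alpha>"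
  unfolding ptsN_def ptsA_def by (cases q) (auto dest!: ndn_Cons_Some)

lemma devN_Inl: "k < n \<Longrightarrow> devN f (Inl k # q) c = devA \<alpha> (\<lambda>p. f (Inl k # p)) q c"
  unfolding devN_def devA_def by (simp add: ptsN_Inl)

lemma Balgn_char: "(Balgn \<alpha> n :: ('o,'k::field) falg) = (ptsN, carN)"
proof -
  have P: "{Inl k # p | k p. k < n \<and> p \<in> ptsA \<alpha>} = ptsN"
    using ptsN_cases ptsN_Inl by blast
  have S: "{f :: 'o pt \<Rightarrow> 'k. (\<forall>k<n. (\<lambda>p. f (Inl k # p)) \<in> charA \<alpha>) \<and> (\<forall>q. q \<notin> ptsN \<longrightarrow> f q = 0)} = carN"
  proof (rule Set.set_eqI, rule iffI)
    fix f :: "'o pt \<Rightarrow> 'k"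
    assume f: "f \<in> {f. (\<forall>k<n. (\<lambda>p. f (Inl k # p)) \<in> charA \<alpha>) \<and> (\<forall>q. q \<notin> ptsN \<longrightarrow> f q = 0)}"
    show "f \<in> carN" unfolding carN_def
    proof (intro CollectI conjI allI impI)
      fix q assume "q \<notin> ptsN" thus "f q = 0" using f by blast
    next
      fix q b assume qb: "ndn q = Some b \<and> \<not> isz b"
      then obtain i q' where q: "q = i # q'" by (cases q) auto
      then obtain k where k: "i = Inl k" "k < n" "nd \<alpha> q' = Some b" using qb ndn_Cons_Some by blast
      have "(\<lambda>p. f (Inl k # p)) \<in> charA \<alpha>" using f k by blast
      then obtain c where "finite (devA \<alpha> (\<lambda>p. f (Inl k # p)) q' c)"
        using k qb unfolding charA_def by blast
      hence "finite (devN f q c)" using devN_Inl[OF k(2), of f q' c] q k by simp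
      thus "\<exists>c. finite (devN f q c)" by blast
    qed
  next
    fix f :: "'o pt \<Rightarrow> 'k" assume f: "f \<in> carN"
    have "(\<lambda>p. f (Inl k # p)) \<in> charA \<alpha>" if k: "k < n" for k
      unfolding charA_def
    proof (intro CollectI conjI allI impI)
      fix q assume "q \<notin> ptsA \<alpha>" thus "f (Inl k # q) = 0" using f k ptsN_Inl unfolding carN_def by blast
    next
      fix q b assume qb: "nd \<alpha> q = Some b \<and> \<not> isz b"
      hence "ndn (Inl k # q) = Some b \<and> \<not> isz b" using k by (simp add: ndn_Inl)
      then obtain c where "finite (devN f (Inl k # q) c)" using f unfolding carN_def by blast
      hence "finite (devA \<alpha> (\<lambda>p. f (Inl k # p)) q c)" using devN_Inl[OF k, of f q c] by simp
      thus "\<exists>c. finite (devA \<alpha> (\<lambda>p. f (Inl k # p)) q c)" by blast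
    qed
    thus "f \<in> {f. (\<forall>k<n. (\<lambda>p. f (Inl k # p)) \<in> charA \<alpha>) \<and> (\<forall>q. q \<notin> ptsN \<longrightarrow> f q = 0)}"
      using f unfolding carN_def by blast
  qed
  show ?thesis unfolding Balgn_def Let_def Balg1_char fst_conv snd_conv P S ..
qed

end


lemma nd_reach: "(g::'o::wellorder) \<le> b \<Longrightarrow> \<exists>r. nd b r = Some g"
proof (induction b rule: less_induct)
  case (less b)
  show ?case
  proof (cases "g = b")
    case True thus ?thesis by (intro exI[of _ "[]"]) simp
  next
    case False
    hence gb: "g < b" using less.prems by simp
    show ?thesis
    proof (cases "\<exists>p. is_pred p b")
      case True
      then obtain p where p: "is_pred p b" by blast
      have "g \<le> p" using p gb unfolding is_pred_def using not_le by blast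
      then obtain r where r: "nd p r = Some g" using less.IH[of p] p unfolding is_pred_def by blast
      have "child b (Inl 0) = Some p" unfolding child_def using p the_pred[OF p] by auto
      thus ?thesis using r by (intro exI[of _ "Inl 0 # r"]) simp
    next
      case False
      have "child b (Inr g) = Some g" unfolding child_def isz_def using False gb by auto
      thus ?thesis by (intro exI[of _ "[Inr g]"]) simp
    qed
  qed
qed

lemma isz_Least: "isz (LEAST x::'o::wellorder. True)"
  unfolding isz_def by (auto simp: not_less intro: Least_le)

lemma nd_reach_leaf: "\<exists>r d. nd (b::'o::wellorder) r = Some d \<and> isz d"
proof -
  obtain r where "nd b r = Some (LEAST x. True)" using nd_reach[of "LEAST x. True" b] by (auto intro: Least_le)
  thus ?thesis using isz_Least by blast
qed

lemma infinite_between: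
  assumes np: "\<not> (\<exists>p. is_pred p b)" and gb: "(g::'o::wellorder) < b"
  shows "infinite {d. g \<le> d \<and> d < b}"
proof
  assume fin: "finite {d. g \<le> d \<and> d < b}"
  have ne: "{d. g \<le> d \<and> d < b} \<noteq> {}" using gb by auto
  define m where "m = Max {d. g \<le> d \<and> d < b}"
  have m: "g \<le> m" "m < b" using Max_in[OF fin ne] unfolding m_def by auto
  have "is_pred m b" unfolding is_pred_def
  proof (intro conjI allI impI)
    show "m < b" by fact
    fix \<delta> assume md: "m < \<delta>"
    show "b \<le> \<delta>"
    proof (rule ccontr)
      assume "\<not> b \<le> \<delta>"
      hence "\<delta> \<in> {d. g \<le> d \<and> d < b}" using md m by auto
      hence "\<delta> \<le> m" unfolding m_def using fin by simp
      thus False using md by simp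
    qed
  qed
  thus False using np by blast
qed

lemma children_infinite:
  assumes gb: "(g::'o::wellorder) < b"
  shows "infinite {i. \<exists>d. child b i = Some d \<and> g \<le> d}"
proof (cases "\<exists>p. is_pred p b")
  case True
  then obtain p where p: "is_pred p b" by blast
  have "g \<le> p" using p gb unfolding is_pred_def using not_le by blast
  hence "range Inl \<subseteq> {i. \<exists>d. child b i = Some d \<and> g \<le> d}"
    unfolding child_def using p the_pred[OF p] by auto
  moreover have "infinite (range (Inl :: nat \<Rightarrow> nat + 'o))"
    using range_inj_infinite[of "Inl :: nat \<Rightarrow> nat + 'o"] by (simp add: inj_def)
  ultimately show ?thesis using finite_subset by blast
next
  case False
  have "Inr ` {d. g \<le> d \<and> d < b} \<subseteq> {i. \<exists>d. child b i = Some d \<and> g \<le> d}"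
    unfolding child_def isz_def using False gb by auto
  moreover have "infinite (Inr ` {d. g \<le> d \<and> d < b} :: (nat + 'o) set)"
    using infinite_between[OF False gb] finite_imageD[of Inr] by (auto simp: inj_on_def)
  ultimately show ?thesis using finite_subset by blast
qed

lemma prefix_cases:
  assumes "q @ i # p = q0 @ r"
  shows "(\<exists>r'. q = q0 @ r') \<or> (\<exists>r'. q0 = q @ i # r')"
proof -
  obtain us where "q = q0 @ us \<and> us @ i # p = r \<or> q @ us = q0 \<and> i # p = us @ r"
    using assms unfolding append_eq_append_conv2 by blast
  thus ?thesis
  proof
    assume "q = q0 @ us \<and> us @ i # p = r" thus ?thesis by blast
  next
    assume h: "q @ us = q0 \<and> i # p = us @ r"
    show ?thesis
    proof (cases us)
      case Nil thus ?thesis using h by (intro disjI1 exI[of _ "[]"]) simp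
    next
      case (Cons u us')
      hence "u = i" using h by simp
      thus ?thesis using h Cons by blast
    qed
  qed
qed

context
  fixes \<alpha> :: "'o::wellorder" and n :: nat
begin

lemma ndn_app: "ndn \<alpha> n q = Some b \<Longrightarrow> ndn \<alpha> n (q @ r) = nd b r"
  by (cases q) (auto dest!: ndn_Cons_Some simp: ndn_Inl nd_append)

lemma ndn_app_inv: "ndn \<alpha> n (q @ r) = Some d \<Longrightarrow> q \<noteq> [] \<Longrightarrow> \<exists>b. ndn \<alpha> n q = Some b \<and> nd b r = Some d"
  by (cases q) (auto dest!: ndn_Cons_Some simp: ndn_Inl nd_append split: option.splits)

lemma ndn_ext_le: "ndn \<alpha> n q = Some b \<Longrightarrow> ndn \<alpha> n (q @ r) = Some d \<Longrightarrow> d \<le> b \<and> (r \<noteq> [] \<longrightarrow> d < b)"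
  using ndn_app[of q b r] nd_le[of b r d] by (cases r) (auto intro: nd_less)

lemma ndn_leaf_ext: "ndn \<alpha> n q = Some b \<Longrightarrow> isz b \<Longrightarrow> ndn \<alpha> n (q @ i # r) = None"
  using ndn_app[of q b "i # r"] by (simp add: child_isz)

lemma node_has_pt: "ndn \<alpha> n q = Some b \<Longrightarrow> \<exists>r. q @ r \<in> ptsN \<alpha> n"
proof -
  assume q: "ndn \<alpha> n q = Some b"
  obtain r d where "nd b r = Some d" "isz d" using nd_reach_leaf[of b] by blast
  hence "q @ r \<in> ptsN \<alpha> n" using ndn_app[OF q, of r] unfolding ptsN_def by simp
  thus ?thesis by blast
qed

lemma ndn_child: "ndn \<alpha> n q = Some b \<Longrightarrow> ndn \<alpha> n (q @ [i]) = child b i"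
  using ndn_app[of q b "[i]"] by (simp split: option.splits)

lemma ptsN_ndn: "p \<in> ptsN \<alpha> n \<Longrightarrow> \<exists>b. ndn \<alpha> n p = Some b \<and> isz b"
  unfolding ptsN_def by blast

lemma pt_ext_node: "q @ r \<in> ptsN \<alpha> n \<Longrightarrow> q \<noteq> [] \<Longrightarrow> \<exists>b. ndn \<alpha> n q = Some b"
  using ndn_app_inv unfolding ptsN_def by blast

end


context
  fixes \<alpha> :: "'o::wellorder" and n :: nat
begin

definition eN :: "'o pt \<Rightarrow> 'o pt \<Rightarrow> 'k::{zero,one}" where
  "eN q0 = (\<lambda>p. if p \<in> ptsN \<alpha> n \<and> (\<exists>r. p = q0 @ r) then 1 else 0)"

lemma carN_bin:
  assumes "f \<in> carN \<alpha> n" "g \<in> carN \<alpha> n" "F 0 0 = 0"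
  shows "(\<lambda>p. F (f p) (g p)) \<in> carN \<alpha> n"
  unfolding carN_def
proof (intro CollectI conjI allI impI)
  fix q assume "q \<notin> ptsN \<alpha> n" thus "F (f q) (g q) = 0" using assms unfolding carN_def by simp
next
  fix q b assume qb: "ndn \<alpha> n q = Some b \<and> \<not> isz b"
  obtain c d where c: "finite (devN \<alpha> n f q c)" "finite (devN \<alpha> n g q d)"
    using assms qb unfolding carN_def by blast
  have "devN \<alpha> n (\<lambda>p. F (f p) (g p)) q (F c d) \<subseteq> devN \<alpha> n f q c \<union> devN \<alpha> n g q d"
    unfolding devN_def by auto
  hence "finite (devN \<alpha> n (\<lambda>p. F (f p) (g p)) q (F c d))" using c finite_subset by blast
  thus "\<exists>c. finite (devN \<alpha> n (\<lambda>p. F (f p) (g p)) q c)" by blast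
qed

lemma carN_un:
  assumes "f \<in> carN \<alpha> n" "F 0 = 0"
  shows "(\<lambda>p. F (f p)) \<in> carN \<alpha> n"
  using carN_bin[OF assms(1) assms(1), of "\<lambda>x y. F x"] assms(2) by simp

lemma carN_const: "(\<lambda>p. if p \<in> ptsN \<alpha> n then c else 0) \<in> carN \<alpha> n"
  unfolding carN_def
proof (intro CollectI conjI allI impI)
  fix q b assume "ndn \<alpha> n q = Some b \<and> \<not> isz b"
  have "devN \<alpha> n (\<lambda>p. if p \<in> ptsN \<alpha> n then c else 0) q c = {}" unfolding devN_def by auto
  thus "\<exists>d. finite (devN \<alpha> n (\<lambda>p. if p \<in> ptsN \<alpha> n then c else 0) q d)" by (metis finite.emptyI)
qed simp

lemma carN_zero: "(\<lambda>p. 0) \<in> carN \<alpha> n"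
  using carN_const[of 0] by simp

lemma eN_car: "eN q0 \<in> carN \<alpha> n"
  unfolding carN_def
proof (intro CollectI conjI allI impI)
  fix q assume "q \<notin> ptsN \<alpha> n" thus "eN q0 q = 0" by (simp add: eN_def)
next
  fix q b assume "ndn \<alpha> n q = Some b \<and> \<not> isz b"
  show "\<exists>c. finite (devN \<alpha> n (eN q0) q c)"
  proof (cases "\<exists>r. q = q0 @ r")
    case True
    have "devN \<alpha> n (eN q0) q 1 = {}" using True unfolding devN_def eN_def by auto
    thus ?thesis by (metis finite.emptyI)
  next
    case nq: False
    show ?thesis
    proof (cases "\<exists>i0 r'. q0 = q @ i0 # r'")
      case True
      then obtain i0 r' where i0: "q0 = q @ i0 # r'" by blast
      have "devN \<alpha> n (eN q0) q 0 \<subseteq> {i0}"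
      proof
        fix i assume "i \<in> devN \<alpha> n (eN q0) q 0"
        then obtain p r where "q @ i # p = q0 @ r" unfolding devN_def eN_def by (auto split: if_splits)
        hence "(\<exists>r'. q = q0 @ r') \<or> (\<exists>r'. q0 = q @ i # r')" by (rule prefix_cases)
        thus "i \<in> {i0}" using nq i0 by auto
      qed
      thus ?thesis using finite_subset by blast
    next
      case False
      have "devN \<alpha> n (eN q0) q 0 = {}"
      proof (rule ccontr)
        assume "devN \<alpha> n (eN q0) q 0 \<noteq> {}"
        then obtain i p r where "q @ i # p = q0 @ r" unfolding devN_def eN_def by (auto split: if_splits)
        hence "(\<exists>r'. q = q0 @ r') \<or> (\<exists>r'. q0 = q @ i # r')" by (rule prefix_cases)
        thus False using nq False by blast
      qed
      thus ?thesis by (metis finite.emptyI)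
    qed
  qed
qed

lemma carN_van: "f \<in> carN \<alpha> n \<Longrightarrow> p \<notin> ptsN \<alpha> n \<Longrightarrow> f p = 0"
  unfolding carN_def by blast

lemma BR: "B_ring \<alpha> n = falg_ring (ptsN \<alpha> n, carN \<alpha> n)"
  by (simp add: B_ring_def Balgn_char)

lemma BR_cring: "cring (B_ring \<alpha> n :: ('o pt \<Rightarrow> 'k::field) ring)"
  unfolding BR
proof (rule falg_cring, unfold fst_conv snd_conv)
  show "(\<lambda>p. 0::'k) \<in> carN \<alpha> n" by (rule carN_zero)
  show "(\<lambda>p. if p \<in> ptsN \<alpha> n then 1::'k else 0) \<in> carN \<alpha> n" by (rule carN_const)
  show "\<And>f g::'o pt \<Rightarrow> 'k. f \<in> carN \<alpha> n \<Longrightarrow> g \<in> carN \<alpha> n \<Longrightarrow> (\<lambda>p. f p + g p) \<in> carN \<alpha> n"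
    by (rule carN_bin) auto
  show "\<And>f g::'o pt \<Rightarrow> 'k. f \<in> carN \<alpha> n \<Longrightarrow> g \<in> carN \<alpha> n \<Longrightarrow> (\<lambda>p. f p * g p) \<in> carN \<alpha> n"
    by (rule carN_bin) auto
  show "\<And>f::'o pt \<Rightarrow> 'k. f \<in> carN \<alpha> n \<Longrightarrow> (\<lambda>p. - f p) \<in> carN \<alpha> n"
    by (rule carN_un) auto
  show "\<And>(f::'o pt \<Rightarrow> 'k) p. f \<in> carN \<alpha> n \<Longrightarrow> p \<notin> ptsN \<alpha> n \<Longrightarrow> f p = 0"
    by (rule carN_van)
qed

lemma BR_ops:
  "carrier (B_ring \<alpha> n) = carN \<alpha> n"
  "x \<oplus>\<^bsub>B_ring \<alpha> n\<^esub> y = (\<lambda>p. x p + y p)"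
  "x \<otimes>\<^bsub>B_ring \<alpha> n\<^esub> y = (\<lambda>p. x p * y p)"
  "\<zero>\<^bsub>B_ring \<alpha> n\<^esub> = (\<lambda>p. 0)"
  "\<one>\<^bsub>B_ring \<alpha> n\<^esub> = (\<lambda>p. if p \<in> ptsN \<alpha> n then 1 else 0)"
  unfolding BR by (auto simp: falg_ring_def)

lemma BR_minus:
  assumes "x \<in> carN \<alpha> n" "y \<in> carN \<alpha> n"
  shows "x \<ominus>\<^bsub>(B_ring \<alpha> n :: ('o pt \<Rightarrow> 'k::field) ring)\<^esub> y = (\<lambda>p. x p - y p)"
  unfolding BR
  by (rule falg_minus) (use BR_cring[unfolded BR] assms carN_un[OF assms(2), of uminus] in auto)

lemma BR_finsum:
  assumes "finite G" "\<And>e. e \<in> G \<Longrightarrow> h e \<in> carN \<alpha> n"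
  shows "finsum (B_ring \<alpha> n :: ('o pt \<Rightarrow> 'k::field) ring) h G = (\<lambda>p. \<Sum>e\<in>G. h e p)"
  unfolding BR
  by (rule falg_finsum) (use BR_cring[unfolded BR] assms in auto)

lemma BR_kalg: "kalg (B_ring \<alpha> n :: ('o pt \<Rightarrow> 'k::field) ring) falg_smult"
proof -
  have "\<And>(x::'o pt \<Rightarrow> 'k) c. x \<in> carN \<alpha> n \<Longrightarrow> (\<lambda>p. c * x p) \<in> carN \<alpha> n"
    by (rule carN_un) auto
  moreover have "\<And>(x::'o pt \<Rightarrow> 'k). x \<in> carN \<alpha> n \<Longrightarrow> (\<lambda>p. 1 * x p) = x" by simp
  ultimately show ?thesis
    unfolding kalg_def BR_ops falg_smult_def
    using BR_cring by (simp add: distrib_left distrib_right mult.assoc)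
qed

lemma BR_vn: "vn_regular (B_ring \<alpha> n :: ('o pt \<Rightarrow> 'k::field) ring)"
  unfolding vn_regular_def BR_ops
proof
  fix a :: "'o pt \<Rightarrow> 'k" assume a: "a \<in> carN \<alpha> n"
  have c1: "(\<lambda>p. inverse (a p)) \<in> carN \<alpha> n" using carN_un[OF a, of inverse] by simp
  have e1: "a = (\<lambda>p. a p * inverse (a p) * a p)"
  proof (rule ext)
    fix p show "a p = a p * inverse (a p) * a p" by (cases "a p = 0") auto
  qed
  show "\<exists>x\<in>carN \<alpha> n. a = (\<lambda>p. a p * x p * a p)"
    by (rule bexI[of _ "\<lambda>p. inverse (a p)"]) (fact e1, fact c1)
qed

end


context
  fixes \<alpha> :: "'o::wellorder" and n :: nat
begin

definition Zf :: "('o pt \<Rightarrow> 'k::zero) \<Rightarrow> 'o pt \<Rightarrow> bool" where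
  "Zf f q \<longleftrightarrow> f q = 0 \<and> finite (devN \<alpha> n f q 0)"

definition SS :: "'o \<Rightarrow> ('o pt \<Rightarrow> 'k::zero) set" where
  "SS g = {f \<in> carN \<alpha> n. \<forall>q b. ndn \<alpha> n q = Some b \<and> g \<le> b \<longrightarrow> Zf f q}"

definition SS' :: "'o \<Rightarrow> ('o pt \<Rightarrow> 'k::zero) set" where
  "SS' g = {f \<in> carN \<alpha> n. \<forall>q b. ndn \<alpha> n q = Some b \<and> g < b \<longrightarrow> Zf f q}"

lemma Zf_bin:
  assumes "Zf f q" "Zf g q" "F 0 0 = 0"
  shows "Zf (\<lambda>p. F (f p) (g p)) q"
proof -
  have "devN \<alpha> n (\<lambda>p. F (f p) (g p)) q 0 \<subseteq> devN \<alpha> n f q 0 \<union> devN \<alpha> n g q 0"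
    unfolding devN_def using assms(3) by auto
  thus ?thesis using assms unfolding Zf_def using finite_subset by auto
qed

lemma Zf_mult:
  assumes "Zf f q" "\<And>y. F 0 y = 0"
  shows "Zf (\<lambda>p. F (f p) (g p)) q"
proof -
  have "devN \<alpha> n (\<lambda>p. F (f p) (g p)) q 0 \<subseteq> devN \<alpha> n f q 0"
    unfolding devN_def using assms(2) by auto
  thus ?thesis using assms unfolding Zf_def using finite_subset by auto
qed

lemma Zf_zero: "Zf (\<lambda>p. 0) q"
  unfolding Zf_def devN_def by simp

lemma Zf_sum:
  assumes "finite G" "\<And>e. e \<in> G \<Longrightarrow> Zf (h e) q"
  shows "Zf (\<lambda>p. \<Sum>e\<in>G. (h e p :: 'k::comm_monoid_add)) q"
  using assms
proof (induction G rule: finite_induct)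
  case empty thus ?case using Zf_zero by simp
next
  case (insert a F)
  have "Zf (\<lambda>p. h a p + (\<Sum>e\<in>F. h e p)) q"
    using insert by (intro Zf_bin[where F = "(+)"]) auto
  thus ?case using insert by simp
qed

lemma Zf_local:
  assumes "\<And>r. f (q @ r) = g (q @ r)"
  shows "Zf f q = Zf g q"
proof -
  have "f q = g q" using assms[of "[]"] by simp
  moreover have "\<And>i p. f (q @ i # p) = g (q @ i # p)" using assms by blast
  hence "devN \<alpha> n f q 0 = devN \<alpha> n g q 0" unfolding devN_def by simp
  ultimately show ?thesis unfolding Zf_def by simp
qed

lemma Zf_van:
  assumes "f \<in> carN \<alpha> n" "\<And>r. q @ r \<in> ptsN \<alpha> n \<Longrightarrow> f (q @ r) = 0"
  shows "Zf f q"
proof -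
  have "f q = 0"
  proof (cases "q \<in> ptsN \<alpha> n")
    case True thus ?thesis using assms(2)[of "[]"] by simp
  next
    case False thus ?thesis using carN_van[OF assms(1)] by simp
  qed
  moreover have "\<And>i p. q @ i # p \<in> ptsN \<alpha> n \<Longrightarrow> f (q @ i # p) = 0" using assms(2) by blast
  hence "devN \<alpha> n f q 0 = {}" unfolding devN_def by blast
  ultimately show ?thesis unfolding Zf_def by simp
qed

lemma Zf_supp:
  assumes van: "\<And>p. \<not> (\<exists>r. p = q0 @ r) \<Longrightarrow> f p = 0" and nq: "\<not> (\<exists>r. q = q0 @ r)"
  shows "Zf f q"
proof -
  have "f q = 0" using van nq by blast
  moreover have "devN \<alpha> n f q 0 \<subseteq> {q0 ! length q}"
  proof
    fix i assume "i \<in> devN \<alpha> n f q 0"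
    then obtain p where p: "f (q @ i # p) \<noteq> 0" unfolding devN_def by blast
    then obtain r where "q @ i # p = q0 @ r" using van by blast
    hence "(\<exists>r'. q = q0 @ r') \<or> (\<exists>r'. q0 = q @ i # r')" by (rule prefix_cases)
    then obtain r' where "q0 = q @ i # r'" using nq by blast
    thus "i \<in> {q0 ! length q}" by simp
  qed
  ultimately show ?thesis unfolding Zf_def using finite_subset by auto
qed

lemma ptsN_ndn_ext: "q @ r \<in> ptsN \<alpha> n \<Longrightarrow> ndn \<alpha> n q = Some b \<Longrightarrow> \<exists>d. ndn \<alpha> n (q @ r) = Some d \<and> isz d"
  unfolding ptsN_def by blast

lemma Zf_nz_leaf:
  assumes "ndn \<alpha> n q = Some b" "isz b" "f q \<noteq> 0"
  shows "\<not> Zf f q"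
  using assms unfolding Zf_def by simp

lemma Least_less: "\<not> isz b \<Longrightarrow> (LEAST x::'o. True) < b"
  unfolding isz_def by (auto intro: Least_le le_less_trans)

lemma Zf_nz_int:
  assumes q: "ndn \<alpha> n q = Some b" and nb: "\<not> isz b" and c: "c \<noteq> 0" and fin: "finite (devN \<alpha> n f q c)"
  shows "\<not> Zf f q"
proof
  assume "Zf f q"
  hence f0: "finite (devN \<alpha> n f q 0)" unfolding Zf_def by simp
  have "{i. \<exists>d. child b i = Some d \<and> (LEAST x::'o. True) \<le> d} \<subseteq> devN \<alpha> n f q c \<union> devN \<alpha> n f q 0"
  proof
    fix i assume "i \<in> {i. \<exists>d. child b i = Some d \<and> (LEAST x::'o. True) \<le> d}"
    then obtain d where d: "child b i = Some d" by blast
    have "ndn \<alpha> n (q @ [i]) = Some d" using ndn_child[OF q] d by simp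
    then obtain r where "(q @ [i]) @ r \<in> ptsN \<alpha> n" using node_has_pt by blast
    hence "q @ i # r \<in> ptsN \<alpha> n" by simp
    thus "i \<in> devN \<alpha> n f q c \<union> devN \<alpha> n f q 0" unfolding devN_def using c by auto
  qed
  moreover have "infinite {i. \<exists>d. child b i = Some d \<and> (LEAST x::'o. True) \<le> d}"
    by (rule children_infinite[OF Least_less[OF nb]])
  ultimately show False using fin f0 finite_subset by blast
qed

lemma Zf_nz_const:
  assumes q: "ndn \<alpha> n q = Some b" and c: "c \<noteq> 0"
    and fc: "\<And>r. q @ r \<in> ptsN \<alpha> n \<Longrightarrow> f (q @ r) = c"
  shows "\<not> Zf f q"
proof (cases "isz b")
  case True
  hence "q \<in> ptsN \<alpha> n" using q unfolding ptsN_def by blast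
  hence fq: "f q = c" using fc[of "[]"] by simp
  show ?thesis by (rule Zf_nz_leaf[OF q True]) (simp add: fq c)
next
  case False
  have "devN \<alpha> n f q c = {}" unfolding devN_def using fc by auto
  thus ?thesis using Zf_nz_int[OF q False c] by simp
qed

lemma ndn_le_alpha: "ndn \<alpha> n q = Some b \<Longrightarrow> b \<le> \<alpha>"
  by (cases q) (auto dest!: ndn_Cons_Some intro: nd_le)

lemma same_rank_prefix:
  assumes "ndn \<alpha> n q = Some g" "ndn \<alpha> n q' = Some g" "q @ r = q' @ r'"
  shows "q = q'"
proof -
  obtain us where "q = q' @ us \<and> us @ r = r' \<or> q @ us = q' \<and> r = us @ r'"
    using assms(3) unfolding append_eq_append_conv2 by blast
  thus ?thesis
  proof
    assume h: "q = q' @ us \<and> us @ r = r'"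
    show ?thesis using ndn_ext_le[OF assms(2), of us g] assms(1) h by (cases "us = []") auto
  next
    assume h: "q @ us = q' \<and> r = us @ r'"
    show ?thesis using ndn_ext_le[OF assms(1), of us g] assms(2) h by (cases "us = []") auto
  qed
qed

lemma carN_sum:
  assumes "finite G" "\<And>e. e \<in> G \<Longrightarrow> h e \<in> carN \<alpha> n"
  shows "(\<lambda>p. \<Sum>e\<in>G. (h e p :: 'k::comm_monoid_add)) \<in> carN \<alpha> n"
  using assms
proof (induction G rule: finite_induct)
  case empty thus ?case using carN_zero by simp
next
  case (insert a F)
  have "(\<lambda>p. h a p + (\<Sum>e\<in>F. h e p)) \<in> carN \<alpha> n"
    using insert by (intro carN_bin[where F = "(+)"]) auto
  thus ?case using insert by simp
qed

end


context
  fixes \<alpha> :: "'o::wellorder" and n :: nat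
begin

lemma Zset_ideal:
  assumes "J = {f \<in> carN \<alpha> n. \<forall>q. P q \<longrightarrow> Zf \<alpha> n f q}"
  shows "ideal (J :: ('o pt \<Rightarrow> 'k::field) set) (B_ring \<alpha> n)"
  unfolding BR
proof (rule falg_ideal, unfold snd_conv)
  show "cring (falg_ring (ptsN \<alpha> n, carN \<alpha> n :: ('o pt \<Rightarrow> 'k) set))" using BR_cring[unfolded BR] .
  show "J \<subseteq> carN \<alpha> n" using assms by blast
  show "(\<lambda>p. 0) \<in> J" using assms carN_zero Zf_zero by blast
  fix f g :: "'o pt \<Rightarrow> 'k"
  show "f \<in> J \<Longrightarrow> g \<in> J \<Longrightarrow> (\<lambda>p. f p + g p) \<in> J"
    using assms carN_bin[where f = f and g = g and F = "(+)"] Zf_bin[where f = f and g = g and F = "(+)"] by auto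
  show "f \<in> J \<Longrightarrow> (\<lambda>p. - f p) \<in> J"
    using assms carN_un[where f = f and F = uminus] Zf_mult[where f = f and F = "\<lambda>x y. - x" and g = f] by auto
  show "f \<in> J \<Longrightarrow> g \<in> carN \<alpha> n \<Longrightarrow> (\<lambda>p. f p * g p) \<in> J"
    using assms carN_bin[where f = f and g = g and F = "(*)"] Zf_mult[where f = f and F = "(*)" and g = g] by auto
qed

lemma SS_ideal: "ideal (SS \<alpha> n g :: ('o pt \<Rightarrow> 'k::field) set) (B_ring \<alpha> n)"
  by (rule Zset_ideal[where P = "\<lambda>q. \<exists>b. ndn \<alpha> n q = Some b \<and> g \<le> b"]) (auto simp: SS_def)

lemma SS'_ideal: "ideal (SS' \<alpha> n g :: ('o pt \<Rightarrow> 'k::field) set) (B_ring \<alpha> n)"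
  by (rule Zset_ideal[where P = "\<lambda>q. \<exists>b. ndn \<alpha> n q = Some b \<and> g < b"]) (auto simp: SS'_def)

lemma SS_mono: "g \<le> g' \<Longrightarrow> SS \<alpha> n g \<subseteq> SS \<alpha> n g'"
  unfolding SS_def by auto

lemma SS_SS': "SS \<alpha> n g \<subseteq> SS' \<alpha> n g"
  unfolding SS_def SS'_def by auto

lemma SS'_alpha: "SS' \<alpha> n \<alpha> = carN \<alpha> n"
  unfolding SS'_def using ndn_le_alpha by (auto simp: not_less[symmetric])

lemma SS_bot: "isz g \<Longrightarrow> SS \<alpha> n g = {\<lambda>p. 0}"
proof -
  assume g: "isz g"
  have "f = (\<lambda>p. 0)" if f: "f \<in> SS \<alpha> n g" for f
  proof
    fix p show "f p = 0"
    proof (cases "p \<in> ptsN \<alpha> n")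
      case True
      then obtain b where b: "ndn \<alpha> n p = Some b" unfolding ptsN_def by blast
      have "g \<le> b" using g unfolding isz_def by (simp add: not_less[symmetric])
      thus ?thesis using f b unfolding SS_def Zf_def by blast
    next
      case False thus ?thesis using f carN_van unfolding SS_def by blast
    qed
  qed
  moreover have "(\<lambda>p. 0) \<in> SS \<alpha> n g" unfolding SS_def using carN_zero Zf_zero by blast
  ultimately show ?thesis by blast
qed

lemma SS_pred: "is_pred d g \<Longrightarrow> SS \<alpha> n g = SS' \<alpha> n d"
proof -
  assume p: "is_pred d g"
  have eq: "(g \<le> b) = (d < b)" for b using p unfolding is_pred_def by (auto intro: less_le_trans)
  show ?thesis unfolding SS_def SS'_def eq ..
qed

end


context
  fixes \<alpha> :: "'o::wellorder" and n :: nat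
begin

lemma node_cons_root: "ndn \<alpha> n q = Some b \<Longrightarrow> \<exists>k r. k < n \<and> q = [Inl k] @ r"
  by (cases q) (auto dest!: ndn_Cons_Some)

lemma ndn_root: "k < n \<Longrightarrow> ndn \<alpha> n [Inl k] = Some \<alpha>"
  by (simp add: ndn_Inl)

lemma van_child:
  assumes x: "x \<in> carN \<alpha> n" and i: "i \<notin> devN \<alpha> n x q 0"
  shows "Zf \<alpha> n x (q @ i # r')"
proof (rule Zf_van[OF x])
  fix s assume "(q @ i # r') @ s \<in> ptsN \<alpha> n"
  hence "q @ i # (r' @ s) \<in> ptsN \<alpha> n" by simp
  thus "x ((q @ i # r') @ s) = 0" using i unfolding devN_def by auto
qed

lemma lim_aux:
  assumes x: "x \<in> carN \<alpha> n" and nz: "\<not> isz l" and np: "\<not> (\<exists>p. is_pred p l)"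
    and Z: "\<And>q b. ndn \<alpha> n q = Some b \<Longrightarrow> l \<le> b \<Longrightarrow> Zf \<alpha> n x q"
  shows "ndn \<alpha> n q = Some \<rho> \<Longrightarrow>
     \<exists>\<delta><l. \<forall>q' b'. (\<exists>r. q' = q @ r) \<and> ndn \<alpha> n q' = Some b' \<and> \<delta> \<le> b' \<longrightarrow> Zf \<alpha> n x q'"
proof (induction \<rho> arbitrary: q rule: less_induct)
  case (less \<rho> q)
  show ?case
  proof (cases "\<rho> < l")
    case True
    have "\<exists>\<delta>. \<rho> < \<delta> \<and> \<delta> < l"
    proof (rule ccontr)
      assume nex: "\<not> (\<exists>\<delta>. \<rho> < \<delta> \<and> \<delta> < l)"
      have "is_pred \<rho> l" unfolding is_pred_def
      proof (intro conjI allI impI)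
        show "\<rho> < l" by fact
        fix \<delta> assume rd: "\<rho> < \<delta>"
        show "l \<le> \<delta>"
        proof (rule ccontr)
          assume "\<not> l \<le> \<delta>" hence "\<delta> < l" by simp
          thus False using rd nex by blast
        qed
      qed
      thus False using np by blast
    qed
    then obtain \<delta> where d: "\<rho> < \<delta>" "\<delta> < l" by blast
    have "\<forall>q' b'. (\<exists>r. q' = q @ r) \<and> ndn \<alpha> n q' = Some b' \<and> \<delta> \<le> b' \<longrightarrow> Zf \<alpha> n x q'"
    proof (intro allI impI)
      fix q' b' assume h: "(\<exists>r. q' = q @ r) \<and> ndn \<alpha> n q' = Some b' \<and> \<delta> \<le> b'"
      then obtain r where "q' = q @ r" by blast
      hence "b' \<le> \<rho>" using ndn_ext_le[OF less.prems, of r b'] h by simp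
      hence "b' < \<delta>" using d(1) by (rule le_less_trans)
      thus "Zf \<alpha> n x q'" using h leD by blast
    qed
    thus ?thesis using d by blast
  next
    case False
    hence lr: "l \<le> \<rho>" by simp
    have Zq: "Zf \<alpha> n x q" using Z[OF less.prems lr] .
    define D where "D = {i. i \<in> devN \<alpha> n x q 0 \<and> child \<rho> i \<noteq> None}"
    have "finite (devN \<alpha> n x q 0)" using Zq unfolding Zf_def by simp
    hence fD: "finite D" unfolding D_def by (rule rev_finite_subset) auto
    have "\<forall>i\<in>D. \<exists>\<delta><l. \<forall>q' b'. (\<exists>r. q' = (q @ [i]) @ r) \<and> ndn \<alpha> n q' = Some b' \<and> \<delta> \<le> b' \<longrightarrow> Zf \<alpha> n x q'"
    proof
      fix i assume "i \<in> D"
      then obtain \<rho>i where ri: "child \<rho> i = Some \<rho>i" unfolding D_def by blast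
      have "ndn \<alpha> n (q @ [i]) = Some \<rho>i" using ndn_child[OF less.prems] ri by simp
      moreover have "\<rho>i < \<rho>" using child_less[OF ri] .
      ultimately show "\<exists>\<delta><l. \<forall>q' b'. (\<exists>r. q' = (q @ [i]) @ r) \<and> ndn \<alpha> n q' = Some b' \<and> \<delta> \<le> b' \<longrightarrow> Zf \<alpha> n x q'"
        using less.IH by blast
    qed
    hence "\<exists>d. \<forall>i\<in>D. d i < l \<and> (\<forall>q' b'. (\<exists>r. q' = (q @ [i]) @ r) \<and> ndn \<alpha> n q' = Some b' \<and> d i \<le> b' \<longrightarrow> Zf \<alpha> n x q')"
      by (rule bchoice)
    then obtain d where d': "\<forall>i\<in>D. d i < l \<and> (\<forall>q' b'. (\<exists>r. q' = (q @ [i]) @ r) \<and> ndn \<alpha> n q' = Some b' \<and> d i \<le> b' \<longrightarrow> Zf \<alpha> n x q')"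
      by blast
    have d: "\<And>i. i \<in> D \<Longrightarrow> d i < l \<and> (\<forall>q' b'. (\<exists>r. q' = (q @ [i]) @ r) \<and> ndn \<alpha> n q' = Some b' \<and> d i \<le> b' \<longrightarrow> Zf \<alpha> n x q')"
      using d' by blast
    obtain \<delta>0 where d0: "\<delta>0 < l" using nz unfolding isz_def by blast
    define \<delta> where "\<delta> = Max (insert \<delta>0 (d ` D))"
    have fin: "finite (insert \<delta>0 (d ` D))" using fD by simp
    have "\<delta> \<in> insert \<delta>0 (d ` D)" unfolding \<delta>_def using Max_in[OF fin] by simp
    hence dl: "\<delta> < l" using d d0 by auto
    have ddi: "i \<in> D \<Longrightarrow> d i \<le> \<delta>" for i unfolding \<delta>_def using fin by simp
    have "\<forall>q' b'. (\<exists>r. q' = q @ r) \<and> ndn \<alpha> n q' = Some b' \<and> \<delta> \<le> b' \<longrightarrow> Zf \<alpha> n x q'"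
    proof (intro allI impI)
      fix q' b' assume h: "(\<exists>r. q' = q @ r) \<and> ndn \<alpha> n q' = Some b' \<and> \<delta> \<le> b'"
      then obtain r where r: "q' = q @ r" by blast
      show "Zf \<alpha> n x q'"
      proof (cases r)
        case Nil thus ?thesis using r Zq by simp
      next
        case (Cons i r')
        show ?thesis
        proof (cases "i \<in> devN \<alpha> n x q 0")
          case False thus ?thesis using van_child[OF x False] r Cons by simp
        next
          case True
          have "ndn \<alpha> n ((q @ [i]) @ r') = Some b'" using h r Cons by simp
          then obtain \<rho>i where "ndn \<alpha> n (q @ [i]) = Some \<rho>i" using ndn_app_inv by blast
          hence "child \<rho> i \<noteq> None" using ndn_child[OF less.prems] by simp
          hence iD: "i \<in> D" unfolding D_def using True by blast
          have "d i \<le> b'" using order_trans[OF ddi[OF iD]] h by blast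
          thus ?thesis using d[OF iD] h r Cons by auto
        qed
      qed
    qed
    thus ?thesis using dl by blast
  qed
qed

lemma lim_main:
  assumes x: "x \<in> carN \<alpha> n" and nz: "\<not> isz l" and np: "\<not> (\<exists>p. is_pred p l)"
    and Z: "\<And>q b. ndn \<alpha> n q = Some b \<Longrightarrow> l \<le> b \<Longrightarrow> Zf \<alpha> n x q"
  shows "\<exists>\<delta><l. \<forall>q b. ndn \<alpha> n q = Some b \<and> \<delta> \<le> b \<longrightarrow> Zf \<alpha> n x q"
proof -
  have "\<forall>k\<in>{..<n}. \<exists>\<delta><l. \<forall>q' b'. (\<exists>r. q' = [Inl k] @ r) \<and> ndn \<alpha> n q' = Some b' \<and> \<delta> \<le> b' \<longrightarrow> Zf \<alpha> n x q'"
  proof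
    fix k assume "k \<in> {..<n}" hence k: "k < n" by simp
    show "\<exists>\<delta><l. \<forall>q' b'. (\<exists>r. q' = [Inl k] @ r) \<and> ndn \<alpha> n q' = Some b' \<and> \<delta> \<le> b' \<longrightarrow> Zf \<alpha> n x q'"
      using lim_aux[OF x nz np Z ndn_root[OF k]] .
  qed
  hence "\<exists>d. \<forall>k\<in>{..<n}. d k < l \<and> (\<forall>q' b'. (\<exists>r. q' = [Inl k] @ r) \<and> ndn \<alpha> n q' = Some b' \<and> d k \<le> b' \<longrightarrow> Zf \<alpha> n x q')"
    by (rule bchoice)
  then obtain d where d': "\<forall>k\<in>{..<n}. d k < l \<and> (\<forall>q' b'. (\<exists>r. q' = [Inl k] @ r) \<and> ndn \<alpha> n q' = Some b' \<and> d k \<le> b' \<longrightarrow> Zf \<alpha> n x q')"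
    by blast
  have d: "\<And>k. k < n \<Longrightarrow> d k < l \<and> (\<forall>q' b'. (\<exists>r. q' = [Inl k] @ r) \<and> ndn \<alpha> n q' = Some b' \<and> d k \<le> b' \<longrightarrow> Zf \<alpha> n x q')"
    using d' by simp
  obtain \<delta>0 where d0: "\<delta>0 < l" using nz unfolding isz_def by blast
  define \<delta> where "\<delta> = Max (insert \<delta>0 (d ` {..<n}))"
  have fin: "finite (insert \<delta>0 (d ` {..<n}))" by simp
  have "\<delta> \<in> insert \<delta>0 (d ` {..<n})" unfolding \<delta>_def using Max_in[OF fin] by simp
  hence dl: "\<delta> < l" using d d0 by auto
  have ddi: "k < n \<Longrightarrow> d k \<le> \<delta>" for k unfolding \<delta>_def using fin by simp
  have "\<forall>q b. ndn \<alpha> n q = Some b \<and> \<delta> \<le> b \<longrightarrow> Zf \<alpha> n x q"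
  proof (intro allI impI)
    fix q b assume h: "ndn \<alpha> n q = Some b \<and> \<delta> \<le> b"
    then obtain k r where kr: "k < n" "q = [Inl k] @ r" using node_cons_root by blast
    have "d k \<le> b" using order_trans[OF ddi[OF kr(1)]] h by blast
    thus "Zf \<alpha> n x q" using d[OF kr(1)] h kr by blast
  qed
  thus ?thesis using dl by blast
qed

lemma SS_limit:
  assumes nz: "\<not> isz l" and np: "\<not> (\<exists>p. is_pred p l)"
  shows "SS \<alpha> n l = \<Union> (SS \<alpha> n ` {d. d < l})"
proof
  show "\<Union> (SS \<alpha> n ` {d. d < l}) \<subseteq> SS \<alpha> n l"
  proof
    fix x assume "x \<in> \<Union> (SS \<alpha> n ` {d. d < l})"
    then obtain d where "d < l" "x \<in> SS \<alpha> n d" by blast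
    thus "x \<in> SS \<alpha> n l" using SS_mono[where g = d and g' = l, OF less_imp_le] by blast
  qed
  show "SS \<alpha> n l \<subseteq> \<Union> (SS \<alpha> n ` {d. d < l})"
  proof
    fix x assume x: "x \<in> SS \<alpha> n l"
    have xc: "x \<in> carN \<alpha> n" using x unfolding SS_def by blast
    obtain \<delta> where "\<delta> < l" "\<forall>q b. ndn \<alpha> n q = Some b \<and> \<delta> \<le> b \<longrightarrow> Zf \<alpha> n x q"
      using lim_main[OF xc nz np] x unfolding SS_def by blast
    hence "\<delta> < l" "x \<in> SS \<alpha> n \<delta>" unfolding SS_def using xc by auto
    thus "x \<in> \<Union> (SS \<alpha> n ` {d. d < l})" by blast
  qed
qed

lemma fin_aux:
  assumes x: "x \<in> carN \<alpha> n"
    and Z: "\<And>q b. ndn \<alpha> n q = Some b \<Longrightarrow> g < b \<Longrightarrow> Zf \<alpha> n x q"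
  shows "ndn \<alpha> n q = Some \<rho> \<Longrightarrow> g \<le> \<rho> \<Longrightarrow>
     finite {q'. (\<exists>r. q' = q @ r) \<and> ndn \<alpha> n q' = Some g \<and> \<not> Zf \<alpha> n x q'}"
proof (induction \<rho> arbitrary: q rule: less_induct)
  case (less \<rho> q)
  show ?case
  proof (cases "g = \<rho>")
    case True
    have "{q'. (\<exists>r. q' = q @ r) \<and> ndn \<alpha> n q' = Some g \<and> \<not> Zf \<alpha> n x q'} \<subseteq> {q}"
    proof
      fix q' assume "q' \<in> {q'. (\<exists>r. q' = q @ r) \<and> ndn \<alpha> n q' = Some g \<and> \<not> Zf \<alpha> n x q'}"
      then obtain r where r: "q' = q @ r" "ndn \<alpha> n q' = Some g" by blast
      have "r = []" using ndn_ext_le[OF less.prems(1), of r g] r True by auto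
      thus "q' \<in> {q}" using r by simp
    qed
    thus ?thesis using finite_subset by blast
  next
    case False
    hence gr: "g < \<rho>" using less.prems by simp
    have Zq: "Zf \<alpha> n x q" using Z[OF less.prems(1) gr] .
    define D where "D = {i. i \<in> devN \<alpha> n x q 0 \<and> (\<exists>\<rho>i. child \<rho> i = Some \<rho>i \<and> g \<le> \<rho>i)}"
    have "finite (devN \<alpha> n x q 0)" using Zq unfolding Zf_def by simp
    hence fD: "finite D" unfolding D_def by (rule rev_finite_subset) auto
    have fi: "finite {q'. (\<exists>r. q' = (q @ [i]) @ r) \<and> ndn \<alpha> n q' = Some g \<and> \<not> Zf \<alpha> n x q'}"
      if iD: "i \<in> D" for i
    proof -
      obtain \<rho>i where ri: "child \<rho> i = Some \<rho>i" "g \<le> \<rho>i" using iD unfolding D_def by blast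
      have "ndn \<alpha> n (q @ [i]) = Some \<rho>i" using ndn_child[OF less.prems(1)] ri by simp
      thus ?thesis using less.IH[OF child_less[OF ri(1)]] ri(2) by blast
    qed
    have "{q'. (\<exists>r. q' = q @ r) \<and> ndn \<alpha> n q' = Some g \<and> \<not> Zf \<alpha> n x q'} \<subseteq>
          (\<Union>i\<in>D. {q'. (\<exists>r. q' = (q @ [i]) @ r) \<and> ndn \<alpha> n q' = Some g \<and> \<not> Zf \<alpha> n x q'})"
    proof
      fix q' assume "q' \<in> {q'. (\<exists>r. q' = q @ r) \<and> ndn \<alpha> n q' = Some g \<and> \<not> Zf \<alpha> n x q'}"
      then obtain r where r: "q' = q @ r" "ndn \<alpha> n q' = Some g" "\<not> Zf \<alpha> n x q'" by blast
      have "r \<noteq> []" using r less.prems(1) gr by auto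
      then obtain i r' where ir: "r = i # r'" by (cases r) auto
      have i1: "i \<in> devN \<alpha> n x q 0" using van_child[OF x, of i q r'] r ir by auto
      have "ndn \<alpha> n ((q @ [i]) @ r') = Some g" using r ir by simp
      then obtain \<rho>i where ri: "ndn \<alpha> n (q @ [i]) = Some \<rho>i" using ndn_app_inv by blast
      have "g \<le> \<rho>i" using ndn_ext_le[OF ri, of r' g] r ir by simp
      moreover have "child \<rho> i = Some \<rho>i" using ri ndn_child[OF less.prems(1)] by simp
      ultimately have "i \<in> D" unfolding D_def using i1 by blast
      thus "q' \<in> (\<Union>i\<in>D. {q'. (\<exists>r. q' = (q @ [i]) @ r) \<and> ndn \<alpha> n q' = Some g \<and> \<not> Zf \<alpha> n x q'})"
        using r ir by auto
    qed
    thus ?thesis using fD fi finite_subset by blast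
  qed
qed

lemma fin_main:
  assumes x: "x \<in> SS' \<alpha> n g" and ga: "g \<le> \<alpha>"
  shows "finite {q. ndn \<alpha> n q = Some g \<and> \<not> Zf \<alpha> n x q}"
proof -
  have xc: "x \<in> carN \<alpha> n" using x unfolding SS'_def by blast
  have Z: "\<And>q b. ndn \<alpha> n q = Some b \<Longrightarrow> g < b \<Longrightarrow> Zf \<alpha> n x q" using x unfolding SS'_def by blast
  have "{q. ndn \<alpha> n q = Some g \<and> \<not> Zf \<alpha> n x q} \<subseteq>
        (\<Union>k\<in>{..<n}. {q'. (\<exists>r. q' = [Inl k] @ r) \<and> ndn \<alpha> n q' = Some g \<and> \<not> Zf \<alpha> n x q'})"
  proof
    fix q assume "q \<in> {q. ndn \<alpha> n q = Some g \<and> \<not> Zf \<alpha> n x q}"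
    then obtain k r where "k < n" "q = [Inl k] @ r" "ndn \<alpha> n q = Some g" "\<not> Zf \<alpha> n x q"
      using node_cons_root by blast
    thus "q \<in> (\<Union>k\<in>{..<n}. {q'. (\<exists>r. q' = [Inl k] @ r) \<and> ndn \<alpha> n q' = Some g \<and> \<not> Zf \<alpha> n x q'})"
      by blast
  qed
  moreover have "finite (\<Union>k\<in>{..<n}. {q'. (\<exists>r. q' = [Inl k] @ r) \<and> ndn \<alpha> n q' = Some g \<and> \<not> Zf \<alpha> n x q'})"
  proof (rule finite_UN_I)
    fix k assume "k \<in> {..<n}" hence k: "k < n" by simp
    show "finite {q'. (\<exists>r. q' = [Inl k] @ r) \<and> ndn \<alpha> n q' = Some g \<and> \<not> Zf \<alpha> n x q'}"
      using fin_aux[OF xc Z ndn_root[OF k] ga] .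
  qed simp
  ultimately show ?thesis by (rule finite_subset)
qed

end


context
  fixes \<alpha> :: "'o::wellorder" and n :: nat
begin

definition Nn :: "'o \<Rightarrow> 'o pt set" where "Nn g = {q. ndn \<alpha> n q = Some g}"

definition Lam :: "'o \<Rightarrow> ('o pt \<Rightarrow> 'k::{zero,one}) set" where "Lam g = eN \<alpha> n ` Nn g"

definition cv :: "('o pt \<Rightarrow> 'k::zero) \<Rightarrow> 'o pt \<Rightarrow> 'k" where
  "cv x q = (SOME c. finite (devN \<alpha> n x q c) \<and> (q \<in> ptsN \<alpha> n \<longrightarrow> c = x q))"

definition lin :: "(('o pt \<Rightarrow> 'k) \<Rightarrow> 'k) \<Rightarrow> 'o pt \<Rightarrow> 'k::field" where
  "lin g0 = (\<lambda>p. \<Sum>e\<in>{e. g0 e \<noteq> 0}. g0 e * e p)"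

lemma cv_prop:
  assumes x: "x \<in> carN \<alpha> n" and q: "ndn \<alpha> n q = Some b"
  shows "finite (devN \<alpha> n x q (cv x q)) \<and> (q \<in> ptsN \<alpha> n \<longrightarrow> cv x q = x q)"
proof -
  have "\<exists>c. finite (devN \<alpha> n x q c) \<and> (q \<in> ptsN \<alpha> n \<longrightarrow> c = x q)"
  proof (cases "isz b")
    case True
    have "devN \<alpha> n x q (x q) = {}"
      unfolding devN_def ptsN_def using ndn_leaf_ext[OF q True] by auto
    thus ?thesis by (metis finite.emptyI)
  next
    case False
    have "q \<notin> ptsN \<alpha> n" using q False unfolding ptsN_def by auto
    moreover obtain c where "finite (devN \<alpha> n x q c)" using x q False unfolding carN_def by blast
    ultimately show ?thesis by blast
  qed
  thus ?thesis unfolding cv_def by (rule someI_ex)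
qed

lemma eN_val: "eN \<alpha> n q0 p = (if p \<in> ptsN \<alpha> n \<and> (\<exists>r. p = q0 @ r) then 1 else 0)"
  by (simp add: eN_def)

lemma eN_same:
  assumes "q \<in> Nn g" "q' \<in> Nn g" "p = q' @ r"
  shows "eN \<alpha> n q p = (if q = q' \<and> p \<in> ptsN \<alpha> n then 1 else 0)"
proof -
  have "(\<exists>r'. p = q @ r') = (q = q')"
  proof
    assume "\<exists>r'. p = q @ r'"
    then obtain r' where "q @ r' = q' @ r" using assms(3) by auto
    thus "q = q'" using same_rank_prefix[where q = q and q' = q'] assms unfolding Nn_def by auto
  qed (use assms(3) in auto)
  thus ?thesis unfolding eN_val by auto
qed

lemma eN_inj: "inj_on (eN \<alpha> n :: 'o pt \<Rightarrow> 'o pt \<Rightarrow> 'k::{zero_neq_one}) (Nn g)"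
proof (rule inj_onI)
  fix q q' assume q: "q \<in> Nn g" and q': "q' \<in> Nn g" and e: "(eN \<alpha> n q :: 'o pt \<Rightarrow> 'k) = eN \<alpha> n q'"
  obtain r where r: "q @ r \<in> ptsN \<alpha> n" using node_has_pt q unfolding Nn_def by blast
  have "(eN \<alpha> n q (q @ r) :: 'k) = 1" using r by (auto simp: eN_val)
  hence e1: "(eN \<alpha> n q' (q @ r) :: 'k) = 1" using e by simp
  show "q = q'"
  proof (rule ccontr)
    assume "q \<noteq> q'"
    hence "(eN \<alpha> n q' (q @ r) :: 'k) = 0" using eN_same[OF q' q, of "q @ r" r] by auto
    thus False using e1 by simp
  qed
qed

lemma finsupp_LamD:
  assumes "g0 \<in> finsupp (Lam g :: ('o pt \<Rightarrow> 'k::field) set)"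
  shows "finite {e. g0 e \<noteq> 0}" "\<And>e. g0 e \<noteq> 0 \<Longrightarrow> e \<in> Lam g"
  using assms unfolding finsupp_def by auto

lemma lin_ext:
  assumes g0: "g0 \<in> finsupp (Lam g :: ('o pt \<Rightarrow> 'k::field) set)" and q: "q \<in> Nn g"
    and p: "p \<in> ptsN \<alpha> n" "p = q @ r"
  shows "lin g0 p = g0 (eN \<alpha> n q)"
proof -
  have "lin g0 p = (\<Sum>e\<in>{e. g0 e \<noteq> 0}. if e = eN \<alpha> n q then g0 e else 0)"
    unfolding lin_def
  proof (rule sum.cong[OF refl])
    fix e assume "e \<in> {e. g0 e \<noteq> 0}"
    then obtain q'' where q'': "q'' \<in> Nn g" "e = eN \<alpha> n q''"
      using finsupp_LamD(2)[OF g0] unfolding Lam_def by blast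
    have "e p = (if q'' = q then 1 else 0)" using eN_same[OF q''(1) q p(2)] p q'' by simp
    moreover have "(q'' = q) = (e = eN \<alpha> n q)" using eN_inj[of g] q q'' unfolding inj_on_def by auto
    ultimately show "g0 e * e p = (if e = eN \<alpha> n q then g0 e else 0)" by simp
  qed
  also have "\<dots> = (if eN \<alpha> n q \<in> {e. g0 e \<noteq> 0} then g0 (eN \<alpha> n q) else 0)"
    using finsupp_LamD(1)[OF g0] by (simp add: sum.delta')
  also have "\<dots> = g0 (eN \<alpha> n q)" by auto
  finally show ?thesis .
qed

lemma lin_out:
  assumes g0: "g0 \<in> finsupp (Lam g :: ('o pt \<Rightarrow> 'k::field) set)"
    and p: "\<not> (p \<in> ptsN \<alpha> n \<and> (\<exists>q\<in>Nn g. \<exists>r. p = q @ r))"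
  shows "lin g0 p = 0"
  unfolding lin_def
proof (rule sum.neutral, rule ballI)
  fix e assume "e \<in> {e. g0 e \<noteq> 0}"
  then obtain q'' where q'': "q'' \<in> Nn g" "e = eN \<alpha> n q''"
    using finsupp_LamD(2)[OF g0] unfolding Lam_def by blast
  have "e p = 0" using p q'' by (auto simp: eN_val)
  thus "g0 e * e p = 0" by simp
qed

lemma lin_cases:
  assumes g0: "g0 \<in> finsupp (Lam g :: ('o pt \<Rightarrow> 'k::field) set)"
  shows "lin g0 p = (if p \<in> ptsN \<alpha> n \<and> (\<exists>q\<in>Nn g. \<exists>r. p = q @ r)
                     then g0 (eN \<alpha> n (SOME q. q \<in> Nn g \<and> (\<exists>r. p = q @ r))) else 0)"
proof (cases "p \<in> ptsN \<alpha> n \<and> (\<exists>q\<in>Nn g. \<exists>r. p = q @ r)")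
  case True
  define s where "s = (SOME q. q \<in> Nn g \<and> (\<exists>r. p = q @ r))"
  obtain q r where qr: "q \<in> Nn g" "p = q @ r" using True by blast
  have "\<exists>q. q \<in> Nn g \<and> (\<exists>r. p = q @ r)" using qr by blast
  hence "s \<in> Nn g \<and> (\<exists>r. p = s @ r)" unfolding s_def by (rule someI_ex)
  then obtain r' where s: "s \<in> Nn g" "p = s @ r'" by blast
  have "q @ r = s @ r'" using qr(2) s(2) by simp
  hence qs: "q = s" using qr(1) s(1) unfolding Nn_def by (rule_tac same_rank_prefix[where r = r and r' = r']) auto
  have pp: "p \<in> ptsN \<alpha> n" using True by blast
  have "lin g0 p = g0 (eN \<alpha> n q)" by (rule lin_ext[OF g0 qr(1) pp qr(2)])
  thus ?thesis unfolding if_P[OF True] s_def[symmetric] qs .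
next
  case False thus ?thesis unfolding if_not_P[OF False] by (rule lin_out[OF g0])
qed

lemma finsupp_add: "g0 \<in> finsupp L \<Longrightarrow> g1 \<in> finsupp L \<Longrightarrow> (\<lambda>i. g0 i + g1 i :: 'k::field) \<in> finsupp L"
  unfolding finsupp_def by (auto intro: rev_finite_subset[of "{i. g0 i \<noteq> 0} \<union> {i. g1 i \<noteq> 0}"])

lemma finsupp_mult: "g0 \<in> finsupp L \<Longrightarrow> g1 \<in> finsupp L \<Longrightarrow> (\<lambda>i. g0 i * g1 i :: 'k::field) \<in> finsupp L"
  unfolding finsupp_def by (auto intro: rev_finite_subset[of "{i. g0 i \<noteq> 0}"])

lemma finsupp_smult: "g0 \<in> finsupp L \<Longrightarrow> (\<lambda>i. c * g0 i :: 'k::field) \<in> finsupp L"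
  unfolding finsupp_def by (auto intro: rev_finite_subset[of "{i. g0 i \<noteq> 0}"])

lemma finsupp_diff: "g0 \<in> finsupp L \<Longrightarrow> g1 \<in> finsupp L \<Longrightarrow> (\<lambda>i. g0 i - g1 i :: 'k::field) \<in> finsupp L"
  unfolding finsupp_def by (auto intro: rev_finite_subset[of "{i. g0 i \<noteq> 0} \<union> {i. g1 i \<noteq> 0}"])

lemma lin_add:
  assumes "g0 \<in> finsupp (Lam g :: ('o pt \<Rightarrow> 'k::field) set)" "g1 \<in> finsupp (Lam g)"
  shows "lin (\<lambda>i. g0 i + g1 i) = (\<lambda>p. lin g0 p + lin g1 p)"
proof
  fix p
  show "lin (\<lambda>i. g0 i + g1 i) p = lin g0 p + lin g1 p"
    unfolding lin_cases[OF assms(1), where p = p] lin_cases[OF assms(2), where p = p] lin_cases[OF finsupp_add[OF assms], where p = p]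
    by (cases "p \<in> ptsN \<alpha> n \<and> (\<exists>q\<in>Nn g. \<exists>r. p = q @ r)") (simp_all only: if_P if_not_P if_True if_False add_0 diff_zero mult_zero_left mult_zero_right)
qed

lemma lin_diff:
  assumes "g0 \<in> finsupp (Lam g :: ('o pt \<Rightarrow> 'k::field) set)" "g1 \<in> finsupp (Lam g)"
  shows "lin (\<lambda>i. g0 i - g1 i) = (\<lambda>p. lin g0 p - lin g1 p)"
proof
  fix p
  show "lin (\<lambda>i. g0 i - g1 i) p = lin g0 p - lin g1 p"
    unfolding lin_cases[OF assms(1), where p = p] lin_cases[OF assms(2), where p = p] lin_cases[OF finsupp_diff[OF assms], where p = p]
    by (cases "p \<in> ptsN \<alpha> n \<and> (\<exists>q\<in>Nn g. \<exists>r. p = q @ r)") (simp_all only: if_P if_not_P if_True if_False add_0 diff_zero mult_zero_left mult_zero_right)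
qed

lemma lin_mult:
  assumes "g0 \<in> finsupp (Lam g :: ('o pt \<Rightarrow> 'k::field) set)" "g1 \<in> finsupp (Lam g)"
  shows "lin (\<lambda>i. g0 i * g1 i) = (\<lambda>p. lin g0 p * lin g1 p)"
proof
  fix p
  show "lin (\<lambda>i. g0 i * g1 i) p = lin g0 p * lin g1 p"
    unfolding lin_cases[OF assms(1), where p = p] lin_cases[OF assms(2), where p = p] lin_cases[OF finsupp_mult[OF assms], where p = p]
    by (cases "p \<in> ptsN \<alpha> n \<and> (\<exists>q\<in>Nn g. \<exists>r. p = q @ r)") (simp_all only: if_P if_not_P if_True if_False add_0 diff_zero mult_zero_left mult_zero_right)
qed

lemma lin_smult:
  assumes "g0 \<in> finsupp (Lam g :: ('o pt \<Rightarrow> 'k::field) set)"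
  shows "lin (\<lambda>i. c * g0 i) = (\<lambda>p. c * lin g0 p)"
proof
  fix p
  show "lin (\<lambda>i. c * g0 i) p = c * lin g0 p"
    unfolding lin_cases[OF assms(1), where p = p] lin_cases[OF finsupp_smult[OF assms], where p = p]
    by (cases "p \<in> ptsN \<alpha> n \<and> (\<exists>q\<in>Nn g. \<exists>r. p = q @ r)") (simp_all only: if_P if_not_P if_True if_False add_0 diff_zero mult_zero_left mult_zero_right)
qed

lemma eN_SS':
  assumes q: "q \<in> Nn g"
  shows "(\<lambda>p. c * eN \<alpha> n q p :: 'k::field) \<in> SS' \<alpha> n g"
  unfolding SS'_def
proof (intro CollectI conjI allI impI)
  show "(\<lambda>p. c * eN \<alpha> n q p) \<in> carN \<alpha> n"
    using carN_un[OF eN_car, where F = "\<lambda>y. c * y"] by simp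
  fix q' b assume h: "ndn \<alpha> n q' = Some b \<and> g < b"
  have "\<not> (\<exists>r. q' = q @ r)"
  proof
    assume "\<exists>r. q' = q @ r"
    then obtain r where "q' = q @ r" by blast
    hence "b \<le> g" using ndn_ext_le[of \<alpha> n q g r b] q h unfolding Nn_def by auto
    thus False using h leD by blast
  qed
  thus "Zf \<alpha> n (\<lambda>p. c * eN \<alpha> n q p) q'"
    by (rule Zf_supp[rotated]) (auto simp: eN_val)
qed

lemma lin_SS':
  assumes g0: "g0 \<in> finsupp (Lam g :: ('o pt \<Rightarrow> 'k::field) set)"
  shows "lin g0 \<in> SS' \<alpha> n g"
proof -
  have fin: "finite {e. g0 e \<noteq> 0}" by (rule finsupp_LamD(1)[OF g0])
  have mem: "(\<lambda>p. g0 e * e p) \<in> SS' \<alpha> n g" if "e \<in> {e. g0 e \<noteq> 0}" for e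
  proof -
    have "e \<in> Lam g" using finsupp_LamD(2)[OF g0] that by simp
    then obtain q where "q \<in> Nn g" "e = eN \<alpha> n q" unfolding Lam_def by blast
    thus ?thesis using eN_SS' by simp
  qed
  show ?thesis unfolding lin_def SS'_def
  proof (intro CollectI conjI allI impI)
    show "(\<lambda>p. \<Sum>e\<in>{e. g0 e \<noteq> 0}. g0 e * e p) \<in> carN \<alpha> n"
      by (rule carN_sum[OF fin, where h = "\<lambda>e p. g0 e * e p"]) (use mem in \<open>auto simp: SS'_def\<close>)
    fix q b assume qb: "ndn \<alpha> n q = Some b \<and> g < b"
    show "Zf \<alpha> n (\<lambda>p. \<Sum>e\<in>{e. g0 e \<noteq> 0}. g0 e * e p) q"
      by (rule Zf_sum[OF fin, where h = "\<lambda>e p. g0 e * e p"]) (use mem qb in \<open>auto simp: SS'_def\<close>)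
  qed
qed

lemma SS_diff: "f \<in> SS \<alpha> n g \<Longrightarrow> h \<in> SS \<alpha> n g \<Longrightarrow> (\<lambda>p. f p - h p :: 'k::field) \<in> SS \<alpha> n g"
  unfolding SS_def using carN_bin[where F = "(-)" and f = f and g = h] Zf_bin[where F = "(-)" and f = f and g = h]
  by auto

lemma SS_add: "f \<in> SS \<alpha> n g \<Longrightarrow> h \<in> SS \<alpha> n g \<Longrightarrow> (\<lambda>p. f p + h p :: 'k::field) \<in> SS \<alpha> n g"
  unfolding SS_def using carN_bin[where F = "(+)" and f = f and g = h] Zf_bin[where F = "(+)" and f = f and g = h]
  by auto

lemma SS_mult: "f \<in> SS \<alpha> n g \<Longrightarrow> h \<in> carN \<alpha> n \<Longrightarrow> (\<lambda>p. f p * h p :: 'k::field) \<in> SS \<alpha> n g"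
  unfolding SS_def using carN_bin[where F = "(*)" and f = f and g = h] Zf_mult[where F = "(*)" and f = f and g = h]
  by auto

lemma SS_smult: "f \<in> SS \<alpha> n g \<Longrightarrow> (\<lambda>p. c * f p :: 'k::field) \<in> SS \<alpha> n g"
  unfolding SS_def using carN_un[where F = "\<lambda>y. c * y" and f = f] Zf_mult[where F = "\<lambda>x y. c * x" and f = f and g = f]
  by auto

lemma SS'_car: "SS' \<alpha> n g \<subseteq> carN \<alpha> n" unfolding SS'_def by blast
lemma SS_car: "SS \<alpha> n g \<subseteq> carN \<alpha> n" unfolding SS_def by blast

end


context
  fixes \<alpha> :: "'o::wellorder" and n :: nat
begin

lemma eN_notSS:
  assumes q: "q \<in> Nn \<alpha> n g"
  shows "(eN \<alpha> n q :: 'o pt \<Rightarrow> 'k::field) \<notin> SS \<alpha> n g"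
proof
  assume "(eN \<alpha> n q :: 'o pt \<Rightarrow> 'k) \<in> SS \<alpha> n g"
  hence "Zf \<alpha> n (eN \<alpha> n q :: 'o pt \<Rightarrow> 'k) q" using q unfolding SS_def Nn_def by blast
  moreover have qg: "ndn \<alpha> n q = Some g" using q by (simp add: Nn_def)
  have "\<not> Zf \<alpha> n (eN \<alpha> n q :: 'o pt \<Rightarrow> 'k) q"
    by (rule Zf_nz_const[where c = 1, OF qg]) (auto simp: eN_val)
  ultimately show False by simp
qed

lemma span_lin:
  assumes x: "x \<in> SS' \<alpha> n g" and ga: "g \<le> \<alpha>"
  shows "\<exists>g0 \<in> finsupp (Lam \<alpha> n g :: ('o pt \<Rightarrow> 'k::field) set). (\<lambda>p. x p - lin g0 p) \<in> SS \<alpha> n g"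
proof -
  have xc: "x \<in> carN \<alpha> n" using x unfolding SS'_def by blast
  define NZ where "NZ = {q. ndn \<alpha> n q = Some g \<and> \<not> Zf \<alpha> n x q}"
  have fNZ: "finite NZ" unfolding NZ_def by (rule fin_main[OF x ga])
  have NZN: "NZ \<subseteq> Nn \<alpha> n g" unfolding NZ_def Nn_def by blast
  define g0 :: "('o pt \<Rightarrow> 'k) \<Rightarrow> 'k" where
    "g0 e = (if \<exists>q\<in>NZ. e = eN \<alpha> n q then cv \<alpha> n x (SOME q. q \<in> NZ \<and> e = eN \<alpha> n q) else 0)" for e
  have inj: "inj_on (eN \<alpha> n :: 'o pt \<Rightarrow> 'o pt \<Rightarrow> 'k) (Nn \<alpha> n g)" by (rule eN_inj)
  have g0_eN: "g0 (eN \<alpha> n q) = cv \<alpha> n x q" if q: "q \<in> NZ" for q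
  proof -
    define s where "s = (SOME q'. q' \<in> NZ \<and> eN \<alpha> n q = (eN \<alpha> n q' :: 'o pt \<Rightarrow> 'k))"
    have "\<exists>q'. q' \<in> NZ \<and> eN \<alpha> n q = (eN \<alpha> n q' :: 'o pt \<Rightarrow> 'k)" using q by blast
    hence s: "s \<in> NZ \<and> eN \<alpha> n q = (eN \<alpha> n s :: 'o pt \<Rightarrow> 'k)" unfolding s_def by (rule someI_ex)
    hence "s = q" using inj q NZN unfolding inj_on_def by blast
    thus ?thesis unfolding g0_def s_def[symmetric] using q by auto
  qed
  have g0_eN0: "g0 (eN \<alpha> n q) = 0" if q: "q \<in> Nn \<alpha> n g" "q \<notin> NZ" for q
  proof -
    have "\<not> (\<exists>q'\<in>NZ. eN \<alpha> n q = (eN \<alpha> n q' :: 'o pt \<Rightarrow> 'k))"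
      using inj q NZN unfolding inj_on_def by blast
    thus ?thesis unfolding g0_def by simp
  qed
  have g0f: "g0 \<in> finsupp (Lam \<alpha> n g)" unfolding finsupp_def
  proof (intro CollectI conjI allI impI)
    have "{e. g0 e \<noteq> 0} \<subseteq> eN \<alpha> n ` NZ" unfolding g0_def by (auto split: if_splits)
    thus "finite {e. g0 e \<noteq> 0}" using fNZ finite_subset by blast
    fix e :: "'o pt \<Rightarrow> 'k" assume "e \<notin> Lam \<alpha> n g"
    thus "g0 e = 0" unfolding g0_def Lam_def using NZN by auto
  qed
  have linS': "lin g0 \<in> SS' \<alpha> n g" by (rule lin_SS'[OF g0f])
  have linc: "lin g0 \<in> carN \<alpha> n" using linS' unfolding SS'_def by blast
  have yc: "(\<lambda>p. x p - lin g0 p) \<in> carN \<alpha> n"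
    using carN_bin[where F = "(-)" and f = x and g = "lin g0"] xc linc by simp
  have "(\<lambda>p. x p - lin g0 p) \<in> SS \<alpha> n g" unfolding SS_def
  proof (intro CollectI conjI allI impI)
    show "(\<lambda>p. x p - lin g0 p) \<in> carN \<alpha> n" by fact
    fix q' b' assume h: "ndn \<alpha> n q' = Some b' \<and> g \<le> b'"
    show "Zf \<alpha> n (\<lambda>p. x p - lin g0 p) q'"
    proof (cases "g < b'")
      case True
      have "Zf \<alpha> n x q'" using x h True unfolding SS'_def by blast
      moreover have "Zf \<alpha> n (lin g0) q'" using linS' h True unfolding SS'_def by blast
      ultimately show ?thesis by (rule Zf_bin) simp
    next
      case False
      hence bg: "b' = g" using h by simp
      hence q'N: "q' \<in> Nn \<alpha> n g" using h unfolding Nn_def by simp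
      define c' where "c' = g0 (eN \<alpha> n q')"
      have loc: "Zf \<alpha> n (\<lambda>p. x p - lin g0 p) q' = Zf \<alpha> n (\<lambda>p. x p - (if p \<in> ptsN \<alpha> n then c' else 0)) q'"
      proof (rule Zf_local)
        fix r
        show "x (q' @ r) - lin g0 (q' @ r) = x (q' @ r) - (if q' @ r \<in> ptsN \<alpha> n then c' else 0)"
        proof (cases "q' @ r \<in> ptsN \<alpha> n")
          case True thus ?thesis using lin_ext[OF g0f q'N True] unfolding c'_def by simp
        next
          case False thus ?thesis using lin_out[OF g0f, of "q' @ r"] by simp
        qed
      qed
      show ?thesis
      proof (cases "q' \<in> NZ")
        case True
        have cc: "c' = cv \<alpha> n x q'" unfolding c'_def using g0_eN[OF True] .
        have cvp: "finite (devN \<alpha> n x q' c') \<and> (q' \<in> ptsN \<alpha> n \<longrightarrow> c' = x q')"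
          using cv_prop[OF xc, of q' g] h bg cc by simp
        have "Zf \<alpha> n (\<lambda>p. x p - (if p \<in> ptsN \<alpha> n then c' else 0)) q'"
          unfolding Zf_def
        proof
          show "x q' - (if q' \<in> ptsN \<alpha> n then c' else 0) = 0"
            using cvp carN_van[OF xc, of q'] by auto
          have "devN \<alpha> n (\<lambda>p. x p - (if p \<in> ptsN \<alpha> n then c' else 0)) q' 0 \<subseteq> devN \<alpha> n x q' c'"
            unfolding devN_def by auto
          thus "finite (devN \<alpha> n (\<lambda>p. x p - (if p \<in> ptsN \<alpha> n then c' else 0)) q' 0)"
            using cvp finite_subset by blast
        qed
        thus ?thesis using loc by simp
      next
        case False
        have c0: "c' = 0" unfolding c'_def using g0_eN0[OF q'N False] .
        have "Zf \<alpha> n x q'" using False h bg unfolding NZ_def by blast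
        moreover have "(\<lambda>p. x p - (if p \<in> ptsN \<alpha> n then c' else 0)) = x" using c0 by (simp add: fun_eq_iff)
        ultimately show ?thesis using loc by simp
      qed
    qed
  qed
  thus ?thesis using g0f by blast
qed

lemma lin_uniq:
  assumes g0: "g0 \<in> finsupp (Lam \<alpha> n g :: ('o pt \<Rightarrow> 'k::field) set)" and g1: "g1 \<in> finsupp (Lam \<alpha> n g)"
    and S: "(\<lambda>p. lin g0 p - lin g1 p) \<in> SS \<alpha> n g"
  shows "g0 = g1"
proof (rule ccontr)
  assume "g0 \<noteq> g1"
  then obtain e where e: "g0 e - g1 e \<noteq> 0" by (auto simp: fun_eq_iff)
  define k where "k = (\<lambda>i. g0 i - g1 i)"
  have kf: "k \<in> finsupp (Lam \<alpha> n g)" unfolding k_def by (rule finsupp_diff[OF g0 g1])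
  have lk: "lin k = (\<lambda>p. lin g0 p - lin g1 p)" unfolding k_def by (rule lin_diff[OF g0 g1])
  have "e \<in> Lam \<alpha> n g" using kf e unfolding finsupp_def k_def by auto
  then obtain q where q: "q \<in> Nn \<alpha> n g" "e = eN \<alpha> n q" unfolding Lam_def by blast
  have "\<not> Zf \<alpha> n (lin k) q"
  proof (rule Zf_nz_const[where c = "k e"])
    show "ndn \<alpha> n q = Some g" using q unfolding Nn_def by simp
    show "k e \<noteq> 0" using e unfolding k_def by simp
    fix r assume "q @ r \<in> ptsN \<alpha> n"
    thus "lin k (q @ r) = k e" using lin_ext[OF kf q(1)] q(2) by simp
  qed
  moreover have "Zf \<alpha> n (lin k) q" using S q unfolding lk SS_def Nn_def by blast
  ultimately show False by simp
qed

lemma H3_lem: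
  assumes q: "q \<in> Nn \<alpha> n g" and x: "x \<in> carN \<alpha> n"
  shows "(\<lambda>p. eN \<alpha> n q p * x p - cv \<alpha> n x q * eN \<alpha> n q p :: 'k::field) \<in> SS \<alpha> n g"
  unfolding SS_def
proof (intro CollectI conjI allI impI)
  define c where "c = cv \<alpha> n x q"
  have qg: "ndn \<alpha> n q = Some g" using q unfolding Nn_def by simp
  have cvp: "finite (devN \<alpha> n x q c) \<and> (q \<in> ptsN \<alpha> n \<longrightarrow> c = x q)"
    unfolding c_def by (rule cv_prop[OF x qg])
  have e: "(eN \<alpha> n q :: 'o pt \<Rightarrow> 'k) \<in> carN \<alpha> n" by (rule eN_car)
  have "(\<lambda>p. eN \<alpha> n q p * x p) \<in> carN \<alpha> n" using carN_bin[OF e x, where F = "(*)"] by simp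
  moreover have "(\<lambda>p. c * eN \<alpha> n q p) \<in> carN \<alpha> n" using carN_un[OF e, where F = "\<lambda>y. c * y"] by simp
  ultimately show "(\<lambda>p. eN \<alpha> n q p * x p - cv \<alpha> n x q * eN \<alpha> n q p :: 'k) \<in> carN \<alpha> n"
    using carN_bin[where F = "(-)" and f = "\<lambda>p. eN \<alpha> n q p * x p" and g = "\<lambda>p. c * eN \<alpha> n q p"]
    unfolding c_def by simp
  fix q' b' assume h: "ndn \<alpha> n q' = Some b' \<and> g \<le> b'"
  show "Zf \<alpha> n (\<lambda>p. eN \<alpha> n q p * x p - cv \<alpha> n x q * eN \<alpha> n q p) q'"
  proof (cases "\<exists>r. q' = q @ r")
    case True
    then obtain r where r: "q' = q @ r" by blast
    have "r = []"
    proof (rule ccontr)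
      assume "r \<noteq> []"
      hence "b' < g" using ndn_ext_le[OF qg, of r b'] h r by simp
      thus False using h leD by blast
    qed
    hence qq: "q' = q" using r by simp
    show ?thesis unfolding qq c_def[symmetric] Zf_def
    proof
      show "eN \<alpha> n q q * x q - c * eN \<alpha> n q q = 0" using cvp by (auto simp: eN_val)
      have "devN \<alpha> n (\<lambda>p. eN \<alpha> n q p * x p - c * eN \<alpha> n q p) q 0 \<subseteq> devN \<alpha> n x q c"
        unfolding devN_def by (auto simp: eN_val)
      thus "finite (devN \<alpha> n (\<lambda>p. eN \<alpha> n q p * x p - c * eN \<alpha> n q p) q 0)"
        using cvp finite_subset by blast
    qed
  next
    case False
    show ?thesis by (rule Zf_supp[OF _ False]) (auto simp: eN_val)
  qed
qed

lemma split_lem: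
  assumes x: "x \<in> carN \<alpha> n" and nx: "x \<notin> SS' \<alpha> n g"
  shows "\<exists>z\<in>carN \<alpha> n. (\<lambda>p. x p * z p) \<notin> SS \<alpha> n g
            \<and> (\<lambda>p. x p * ((if p \<in> ptsN \<alpha> n then 1 else 0) - z p)) \<notin> SS \<alpha> n g
            \<and> (\<lambda>p. z p * z p) = (z :: 'o pt \<Rightarrow> 'k::field)"
proof -
  obtain q b where qb: "ndn \<alpha> n q = Some b" "g < b" "\<not> Zf \<alpha> n x q"
    using x nx unfolding SS'_def by blast
  have nb: "\<not> isz b" using qb(2) unfolding isz_def by blast
  have qnp: "q \<notin> ptsN \<alpha> n" using qb(1) nb unfolding ptsN_def by auto
  define c where "c = cv \<alpha> n x q"
  have fc: "finite (devN \<alpha> n x q c)" using cv_prop[OF x qb(1)] unfolding c_def by blast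
  have cn: "c \<noteq> 0"
  proof
    assume "c = 0"
    hence "Zf \<alpha> n x q" using fc carN_van[OF x qnp] unfolding Zf_def by simp
    thus False using qb by simp
  qed
  have "infinite {i. \<exists>d. child b i = Some d \<and> g \<le> d}" by (rule children_infinite[OF qb(2)])
  hence "\<not> {i. \<exists>d. child b i = Some d \<and> g \<le> d} \<subseteq> devN \<alpha> n x q c" using fc finite_subset by blast
  then obtain i d where i: "child b i = Some d" "g \<le> d" "i \<notin> devN \<alpha> n x q c" by blast
  have qi: "ndn \<alpha> n (q @ [i]) = Some d" using ndn_child[OF qb(1)] i by simp
  define z :: "'o pt \<Rightarrow> 'k" where "z = eN \<alpha> n (q @ [i])"
  have zc: "z \<in> carN \<alpha> n" unfolding z_def by (rule eN_car)
  have zz: "(\<lambda>p. z p * z p) = z" unfolding z_def eN_def by (auto simp: fun_eq_iff)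
  have xc_pt: "x (q @ i # r) = c" if "q @ i # r \<in> ptsN \<alpha> n" for r
    using i(3) that unfolding devN_def by blast
  have n1: "(\<lambda>p. x p * z p) \<notin> SS \<alpha> n g"
  proof
    assume "(\<lambda>p. x p * z p) \<in> SS \<alpha> n g"
    hence "Zf \<alpha> n (\<lambda>p. x p * z p) (q @ [i])" using qi i(2) unfolding SS_def by blast
    moreover have "\<not> Zf \<alpha> n (\<lambda>p. x p * z p) (q @ [i])"
    proof (rule Zf_nz_const[OF qi cn])
      fix r assume "(q @ [i]) @ r \<in> ptsN \<alpha> n"
      thus "x ((q @ [i]) @ r) * z ((q @ [i]) @ r) = c" using xc_pt[of r] unfolding z_def eN_val by auto
    qed
    ultimately show False by simp
  qed
  have n2: "(\<lambda>p. x p * ((if p \<in> ptsN \<alpha> n then 1 else 0) - z p)) \<notin> SS \<alpha> n g"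
  proof
    assume "(\<lambda>p. x p * ((if p \<in> ptsN \<alpha> n then 1 else 0) - z p)) \<in> SS \<alpha> n g"
    hence "Zf \<alpha> n (\<lambda>p. x p * ((if p \<in> ptsN \<alpha> n then 1 else 0) - z p)) q" using qb unfolding SS_def by fastforce
    moreover have "\<not> Zf \<alpha> n (\<lambda>p. x p * ((if p \<in> ptsN \<alpha> n then 1 else 0) - z p)) q"
    proof (rule Zf_nz_int[OF qb(1) nb cn])
      have "devN \<alpha> n (\<lambda>p. x p * ((if p \<in> ptsN \<alpha> n then 1 else 0) - z p)) q c \<subseteq> insert i (devN \<alpha> n x q c)"
      proof
        fix i' assume "i' \<in> devN \<alpha> n (\<lambda>p. x p * ((if p \<in> ptsN \<alpha> n then 1 else 0) - z p)) q c"
        then obtain p where p: "q @ i' # p \<in> ptsN \<alpha> n" "x (q @ i' # p) * (1 - z (q @ i' # p)) \<noteq> c"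
          unfolding devN_def by auto
        show "i' \<in> insert i (devN \<alpha> n x q c)"
        proof (cases "i' = i")
          case False
          hence "z (q @ i' # p) = 0" unfolding z_def eN_val by auto
          thus ?thesis using p unfolding devN_def by auto
        qed simp
      qed
      thus "finite (devN \<alpha> n (\<lambda>p. x p * ((if p \<in> ptsN \<alpha> n then 1 else 0) - z p)) q c)"
        using fc finite_subset by blast
    qed
    ultimately show False by simp
  qed
  show ?thesis using zc n1 n2 zz by blast
qed

end


context
  fixes \<alpha> :: "'o::wellorder" and n :: nat
begin

lemma SS'_add: "f \<in> SS' \<alpha> n g \<Longrightarrow> h \<in> SS' \<alpha> n g \<Longrightarrow> (\<lambda>p. f p + h p :: 'k::field) \<in> SS' \<alpha> n g"
  unfolding SS'_def using carN_bin[where F = "(+)" and f = f and g = h] Zf_bin[where F = "(+)" and f = f and g = h]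
  by auto

lemma SS'_mult: "f \<in> SS' \<alpha> n g \<Longrightarrow> h \<in> carN \<alpha> n \<Longrightarrow> (\<lambda>p. f p * h p :: 'k::field) \<in> SS' \<alpha> n g"
  unfolding SS'_def using carN_bin[where F = "(*)" and f = f and g = h] Zf_mult[where F = "(*)" and f = f and g = h]
  by auto

lemma SS'_smult: "f \<in> SS' \<alpha> n g \<Longrightarrow> (\<lambda>p. c * f p :: 'k::field) \<in> SS' \<alpha> n g"
  unfolding SS'_def using carN_un[where F = "\<lambda>y. c * y" and f = f] Zf_mult[where F = "\<lambda>x y. c * x" and f = f and g = f]
  by auto

lemma eN01: "(\<lambda>p. eN \<alpha> n q p * eN \<alpha> n q p) = (eN \<alpha> n q :: 'o pt \<Rightarrow> 'k::field)"
  by (auto simp: fun_eq_iff eN_val)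

lemma socle_step_SS:
  assumes ga: "g \<le> \<alpha>"
  shows "socle_step (B_ring \<alpha> n :: ('o pt \<Rightarrow> 'k::field) ring) (SS \<alpha> n g) = SS' \<alpha> n g"
proof (rule socle_crit[OF BR_kalg SS_ideal SS'_ideal SS_SS', where \<Lambda> = "Lam \<alpha> n g"])
  show "Lam \<alpha> n g \<subseteq> (SS' \<alpha> n g :: ('o pt \<Rightarrow> 'k) set)"
  proof
    fix e :: "'o pt \<Rightarrow> 'k" assume "e \<in> Lam \<alpha> n g"
    then obtain q where q: "q \<in> Nn \<alpha> n g" "e = eN \<alpha> n q" unfolding Lam_def by blast
    thus "e \<in> SS' \<alpha> n g" using eN_SS'[OF q(1), where c = 1] by simp
  qed
next
  fix e :: "'o pt \<Rightarrow> 'k" assume "e \<in> Lam \<alpha> n g"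
  then obtain q where q: "q \<in> Nn \<alpha> n g" "e = eN \<alpha> n q" unfolding Lam_def by blast
  show "e \<otimes>\<^bsub>B_ring \<alpha> n\<^esub> e = e \<and> e \<notin> SS \<alpha> n g"
    using eN01[of q] eN_notSS[OF q(1)] q(2) by (simp add: BR_ops)
next
  fix e x :: "'o pt \<Rightarrow> 'k" assume e: "e \<in> Lam \<alpha> n g" and x: "x \<in> carrier (B_ring \<alpha> n)"
  then obtain q where q: "q \<in> Nn \<alpha> n g" "e = eN \<alpha> n q" unfolding Lam_def by blast
  have xc: "x \<in> carN \<alpha> n" using x by (simp add: BR_ops)
  have ec: "e \<in> carN \<alpha> n" using q eN_car by simp
  have c1: "e \<otimes>\<^bsub>B_ring \<alpha> n\<^esub> x \<in> carN \<alpha> n" using carN_bin[OF ec xc, where F = "(*)"] by (simp add: BR_ops)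
  have c2: "falg_smult c e \<in> carN \<alpha> n" for c
    using carN_un[OF ec, where F = "\<lambda>y. c * y"] by (simp add: falg_smult_def)
  have "e \<otimes>\<^bsub>B_ring \<alpha> n\<^esub> x \<ominus>\<^bsub>B_ring \<alpha> n\<^esub> falg_smult (cv \<alpha> n x q) e
        = (\<lambda>p. eN \<alpha> n q p * x p - cv \<alpha> n x q * eN \<alpha> n q p)"
    unfolding BR_minus[OF c1 c2] using q(2) by (simp add: BR_ops falg_smult_def)
  thus "\<exists>c. e \<otimes>\<^bsub>B_ring \<alpha> n\<^esub> x \<ominus>\<^bsub>B_ring \<alpha> n\<^esub> falg_smult c e \<in> SS \<alpha> n g"
    using H3_lem[OF q(1) xc] by metis
next
  fix x :: "'o pt \<Rightarrow> 'k" assume x: "x \<in> SS' \<alpha> n g"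
  obtain g0 where g0: "g0 \<in> finsupp (Lam \<alpha> n g)" "(\<lambda>p. x p - lin g0 p) \<in> SS \<alpha> n g"
    using span_lin[OF x ga] by blast
  have xc: "x \<in> carN \<alpha> n" using x unfolding SS'_def by blast
  have fin: "finite {e. g0 e \<noteq> 0}" by (rule finsupp_LamD(1)[OF g0(1)])
  have sub: "{e. g0 e \<noteq> 0} \<subseteq> Lam \<alpha> n g" using finsupp_LamD(2)[OF g0(1)] by blast
  have ecar: "falg_smult (g0 e) e \<in> carN \<alpha> n" if "e \<in> {e. g0 e \<noteq> 0}" for e
  proof -
    have "e \<in> eN \<alpha> n ` Nn \<alpha> n g" using sub that unfolding Lam_def by auto
    then obtain q where "e = eN \<alpha> n q" by blast
    thus ?thesis using carN_un[OF eN_car, where F = "\<lambda>y. g0 e * y"] by (simp add: falg_smult_def)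
  qed
  have fs: "finsum (B_ring \<alpha> n) (\<lambda>e. falg_smult (g0 e) e) {e. g0 e \<noteq> 0} = lin g0"
  proof -
    have "finsum (B_ring \<alpha> n) (\<lambda>e. falg_smult (g0 e) e) {e. g0 e \<noteq> 0} =
          (\<lambda>p. \<Sum>e\<in>{e. g0 e \<noteq> 0}. falg_smult (g0 e) e p)"
      by (rule BR_finsum[OF fin ecar])
    thus ?thesis unfolding lin_def falg_smult_def by simp
  qed
  have linc: "lin g0 \<in> carN \<alpha> n" using lin_SS'[OF g0(1)] unfolding SS'_def by blast
  have "x \<ominus>\<^bsub>B_ring \<alpha> n\<^esub> finsum (B_ring \<alpha> n) (\<lambda>e. falg_smult (g0 e) e) {e. g0 e \<noteq> 0} \<in> SS \<alpha> n g"
    unfolding fs BR_minus[OF xc linc] by (rule g0(2))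
  thus "\<exists>G c. finite G \<and> G \<subseteq> Lam \<alpha> n g \<and>
            x \<ominus>\<^bsub>B_ring \<alpha> n\<^esub> finsum (B_ring \<alpha> n) (\<lambda>e. falg_smult (c e) e) G \<in> SS \<alpha> n g"
    using fin sub by blast
next
  fix x :: "'o pt \<Rightarrow> 'k" assume x: "x \<in> carrier (B_ring \<alpha> n)" and nx: "x \<notin> SS' \<alpha> n g"
  have xc: "x \<in> carN \<alpha> n" using x by (simp add: BR_ops)
  obtain z where z: "z \<in> carN \<alpha> n" "(\<lambda>p. x p * z p) \<notin> SS \<alpha> n g"
      "(\<lambda>p. x p * ((if p \<in> ptsN \<alpha> n then 1 else 0) - z p)) \<notin> SS \<alpha> n g" "(\<lambda>p. z p * z p) = z"
    using split_lem[OF xc nx] by blast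
  have oc: "\<one>\<^bsub>B_ring \<alpha> n\<^esub> \<in> carN \<alpha> n" using carN_const by (simp add: BR_ops)
  have om: "\<one>\<^bsub>B_ring \<alpha> n\<^esub> \<ominus>\<^bsub>B_ring \<alpha> n\<^esub> z = (\<lambda>p. (if p \<in> ptsN \<alpha> n then 1 else 0) - z p)"
    unfolding BR_minus[OF oc z(1)] by (simp add: BR_ops)
  show "\<exists>z\<in>carrier (B_ring \<alpha> n). x \<otimes>\<^bsub>B_ring \<alpha> n\<^esub> z \<notin> SS \<alpha> n g \<and>
          x \<otimes>\<^bsub>B_ring \<alpha> n\<^esub> (\<one>\<^bsub>B_ring \<alpha> n\<^esub> \<ominus>\<^bsub>B_ring \<alpha> n\<^esub> z) \<notin> SS \<alpha> n g \<and>
          z \<otimes>\<^bsub>B_ring \<alpha> n\<^esub> z = z"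
    using z om by (intro bexI[of _ z]) (simp_all add: BR_ops)
qed

lemma soc_seq_SS:
  "g \<le> \<alpha> \<Longrightarrow> soc_seq (B_ring \<alpha> n :: ('o pt \<Rightarrow> 'k::field) ring) g = SS \<alpha> n g"
proof (induction g rule: less_induct)
  case (less g)
  show ?case
  proof (cases "\<exists>\<gamma>. \<gamma> < g")
    case False
    hence "isz g" unfolding isz_def by simp
    thus ?thesis using False by (subst soc_seq_unfold) (simp add: SS_bot BR_ops)
  next
    case nz: True
    show ?thesis
    proof (cases "\<exists>\<gamma>. is_pred \<gamma> g")
      case True
      then obtain d where d: "is_pred d g" by blast
      have dg: "d < g" using d unfolding is_pred_def by simp
      have "soc_seq (B_ring \<alpha> n :: ('o pt \<Rightarrow> 'k) ring) g = socle_step (B_ring \<alpha> n) (soc_seq (B_ring \<alpha> n) d)"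
        using nz True the_pred[OF d] by (subst soc_seq_unfold) simp
      also have "\<dots> = socle_step (B_ring \<alpha> n) (SS \<alpha> n d)" using less.IH[OF dg] dg less.prems by simp
      also have "\<dots> = SS' \<alpha> n d" using socle_step_SS[OF less_imp_le[OF less_le_trans[OF dg less.prems]]] by simp
      also have "\<dots> = SS \<alpha> n g" by (rule sym, rule SS_pred[OF d])
      finally show ?thesis .
    next
      case False
      have "soc_seq (B_ring \<alpha> n :: ('o pt \<Rightarrow> 'k) ring) g = \<Union> (soc_seq (B_ring \<alpha> n) ` {\<gamma>. \<gamma> < g})"
        using nz False by (subst soc_seq_unfold) simp
      also have "\<dots> = \<Union> (SS \<alpha> n ` {\<gamma>. \<gamma> < g})" using less.IH less.prems by simp
      also have "\<dots> = SS \<alpha> n g" by (rule sym, rule SS_limit) (use nz False in \<open>auto simp: isz_def\<close>)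
      finally show ?thesis .
    qed
  qed
qed

end


lemma nd_set: "nd b q = Some d \<Longrightarrow> set q \<subseteq> range Inl \<union> Inr ` {\<gamma>. \<gamma> < (b::'o::wellorder)}"
proof (induction q arbitrary: b)
  case Nil thus ?case by simp
next
  case (Cons i q)
  then obtain c where c: "child b i = Some c" "nd c q = Some d" by (auto split: option.splits)
  have cb: "c < b" by (rule child_less[OF c(1)])
  have "i \<in> range Inl \<union> Inr ` {\<gamma>. \<gamma> < b}"
  proof (cases i)
    case (Inl k) thus ?thesis by simp
  next
    case (Inr \<beta>)
    have "\<beta> < b" using c(1) Inr unfolding child_def by (auto split: if_splits)
    thus ?thesis using Inr by simp
  qed
  moreover have "set q \<subseteq> range Inl \<union> Inr ` {\<gamma>. \<gamma> < b}"
    using Cons.IH[OF c(2)] cb by (auto intro: less_trans)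
  ultimately show ?case by simp
qed

context
  fixes \<alpha> :: "'o::wellorder" and n :: nat
begin

lemma coset_eq: "S +>\<^bsub>B_ring \<alpha> n\<^esub> x = (\<lambda>s p. s p + x p) ` S"
  unfolding a_r_coset_def r_coset_def by (auto simp: BR_ops)

lemma SS_zero: "(\<lambda>p. 0) \<in> SS \<alpha> n g"
  unfolding SS_def using carN_zero Zf_zero by blast

lemma layer_SS:
  assumes ga: "g \<le> \<alpha>"
  shows "layer_iso (B_ring \<alpha> n :: ('o pt \<Rightarrow> 'k::field) ring) falg_smult g (Lam \<alpha> n g)"
proof -
  define S :: "('o pt \<Rightarrow> 'k) set" where "S = SS \<alpha> n g"
  define T :: "('o pt \<Rightarrow> 'k) set" where "T = SS' \<alpha> n g"
  define cs where "cs x = (\<lambda>s p. s p + x p) ` S" for x :: "'o pt \<Rightarrow> 'k"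
  define \<phi> where "\<phi> C = (THE g0. g0 \<in> finsupp (Lam \<alpha> n g) \<and> (\<exists>x\<in>C. (\<lambda>p. x p - lin g0 p) \<in> S))"
    for C :: "('o pt \<Rightarrow> 'k) set"
  have Tc: "x \<in> T \<Longrightarrow> x \<in> carN \<alpha> n" for x unfolding T_def SS'_def by blast
  have phi_eq: "\<phi> (cs x) = g0" if x: "x \<in> T" and g0: "g0 \<in> finsupp (Lam \<alpha> n g)"
      and xg: "(\<lambda>p. x p - lin g0 p) \<in> S" for x g0
    unfolding \<phi>_def
  proof (rule the_equality)
    have "x \<in> cs x" unfolding cs_def using SS_zero[of g] unfolding S_def by force
    thus "g0 \<in> finsupp (Lam \<alpha> n g) \<and> (\<exists>y\<in>cs x. (\<lambda>p. y p - lin g0 p) \<in> S)" using g0 xg by blast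
  next
    fix g1 :: "('o pt \<Rightarrow> 'k) \<Rightarrow> 'k" assume h: "g1 \<in> finsupp (Lam \<alpha> n g) \<and> (\<exists>y\<in>cs x. (\<lambda>p. y p - lin g1 p) \<in> S)"
    then obtain s where s: "s \<in> S" "(\<lambda>p. (s p + x p) - lin g1 p) \<in> S" unfolding cs_def by auto
    have "(\<lambda>p. ((s p + x p) - lin g1 p) - (x p - lin g0 p)) \<in> S"
      using SS_diff[OF s(2)[unfolded S_def] xg[unfolded S_def]] unfolding S_def .
    hence "(\<lambda>p. (((s p + x p) - lin g1 p) - (x p - lin g0 p)) - s p) \<in> S"
      using SS_diff[OF _ s(1)[unfolded S_def]] unfolding S_def by blast
    moreover have "(\<lambda>p. (((s p + x p) - lin g1 p) - (x p - lin g0 p)) - s p) = (\<lambda>p. lin g0 p - lin g1 p)"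
      by (simp add: fun_eq_iff algebra_simps)
    ultimately have "(\<lambda>p. lin g0 p - lin g1 p) \<in> SS \<alpha> n g" unfolding S_def by simp
    thus "g1 = g0" using lin_uniq[OF g0] h by (metis)
  qed
  have ex: "\<exists>g0\<in>finsupp (Lam \<alpha> n g). (\<lambda>p. x p - lin g0 p) \<in> S" if "x \<in> T" for x
    using span_lin[OF that[unfolded T_def] ga] unfolding S_def .
  have cs_eq: "cs x = cs y" if "(\<lambda>p. x p - y p) \<in> S" for x y
  proof -
    have 1: "(\<lambda>p. s p + (x p - y p)) \<in> S" if "s \<in> S" for s
      using SS_add[OF that[unfolded S_def] \<open>(\<lambda>p. x p - y p) \<in> S\<close>[unfolded S_def]] unfolding S_def .
    have 2: "(\<lambda>p. s p - (x p - y p)) \<in> S" if "s \<in> S" for s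
      using SS_diff[OF that[unfolded S_def] \<open>(\<lambda>p. x p - y p) \<in> S\<close>[unfolded S_def]] unfolding S_def .
    show ?thesis unfolding cs_def
    proof (rule Set.set_eqI, rule iffI)
      fix z assume "z \<in> (\<lambda>s p. s p + x p) ` S"
      then obtain s where s: "s \<in> S" "z = (\<lambda>p. s p + x p)" by blast
      have zz: "z = (\<lambda>p. (s p + (x p - y p)) + y p)" using s by (simp add: fun_eq_iff)
      show "z \<in> (\<lambda>s p. s p + y p) ` S" by (rule image_eqI[OF _ 1[OF s(1)]]) (simp add: zz)
    next
      fix z assume "z \<in> (\<lambda>s p. s p + y p) ` S"
      then obtain s where s: "s \<in> S" "z = (\<lambda>p. s p + y p)" by blast
      have zz: "z = (\<lambda>p. (s p - (x p - y p)) + x p)" using s by (simp add: fun_eq_iff)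
      show "z \<in> (\<lambda>s p. s p + x p) ` S" by (rule image_eqI[OF _ 2[OF s(1)]]) (simp add: zz)
    qed
  qed
  have bij: "bij_betw \<phi> (cs ` T) (finsupp (Lam \<alpha> n g))"
    unfolding bij_betw_def
  proof (intro conjI)
    show "inj_on \<phi> (cs ` T)"
    proof (rule inj_onI)
      fix C1 C2 assume C1: "C1 \<in> cs ` T" and C2: "C2 \<in> cs ` T" and eq: "\<phi> C1 = \<phi> C2"
      obtain x where x: "x \<in> T" "C1 = cs x" using C1 by blast
      obtain y where y: "y \<in> T" "C2 = cs y" using C2 by blast
      obtain g0 where g0: "g0 \<in> finsupp (Lam \<alpha> n g)" "(\<lambda>p. x p - lin g0 p) \<in> S" using ex[OF x(1)] by blast
      obtain g1 where g1: "g1 \<in> finsupp (Lam \<alpha> n g)" "(\<lambda>p. y p - lin g1 p) \<in> S" using ex[OF y(1)] by blast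
      have "g0 = g1" using eq phi_eq[OF x(1) g0] phi_eq[OF y(1) g1] x y by simp
      hence "(\<lambda>p. (x p - lin g0 p) - (y p - lin g0 p)) \<in> S"
        using SS_diff[OF g0(2)[unfolded S_def] g1(2)[unfolded S_def]] unfolding S_def by simp
      moreover have "(\<lambda>p. (x p - lin g0 p) - (y p - lin g0 p)) = (\<lambda>p. x p - y p)" by (simp add: fun_eq_iff)
      ultimately have "cs x = cs y" using cs_eq by simp
      thus "C1 = C2" using x y by simp
    qed
    show "\<phi> ` cs ` T = finsupp (Lam \<alpha> n g)"
    proof
      show "\<phi> ` cs ` T \<subseteq> finsupp (Lam \<alpha> n g)"
      proof
        fix g' assume "g' \<in> \<phi> ` cs ` T"
        then obtain x where x: "x \<in> T" "g' = \<phi> (cs x)" by blast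
        obtain g0 where g0: "g0 \<in> finsupp (Lam \<alpha> n g)" "(\<lambda>p. x p - lin g0 p) \<in> S" using ex[OF x(1)] by blast
        show "g' \<in> finsupp (Lam \<alpha> n g)" using phi_eq[OF x(1) g0] x g0 by simp
      qed
      show "finsupp (Lam \<alpha> n g) \<subseteq> \<phi> ` cs ` T"
      proof
        fix g0 :: "('o pt \<Rightarrow> 'k) \<Rightarrow> 'k" assume g0: "g0 \<in> finsupp (Lam \<alpha> n g)"
        have lT: "lin g0 \<in> T" unfolding T_def by (rule lin_SS'[OF g0])
        have "(\<lambda>p. lin g0 p - lin g0 p) \<in> S" using SS_zero[of g] unfolding S_def by simp
        hence "\<phi> (cs (lin g0)) = g0" using phi_eq[OF lT g0] by simp
        hence "g0 = \<phi> (cs (lin g0))" by simp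
        thus "g0 \<in> \<phi> ` cs ` T" using lT by (intro image_eqI[where x = "cs (lin g0)"] imageI)
      qed
    qed
  qed
  have add: "\<phi> (cs (x \<oplus>\<^bsub>B_ring \<alpha> n\<^esub> y)) = (\<lambda>i. \<phi> (cs x) i + \<phi> (cs y) i)" if x: "x \<in> T" and y: "y \<in> T" for x y
  proof -
    obtain g0 where g0: "g0 \<in> finsupp (Lam \<alpha> n g)" "(\<lambda>p. x p - lin g0 p) \<in> S" using ex[OF x] by blast
    obtain g1 where g1: "g1 \<in> finsupp (Lam \<alpha> n g)" "(\<lambda>p. y p - lin g1 p) \<in> S" using ex[OF y] by blast
    have xy: "(\<lambda>p. x p + y p) \<in> T" using SS'_add x y unfolding T_def by blast
    have "(\<lambda>p. (x p - lin g0 p) + (y p - lin g1 p)) \<in> S"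
      using SS_add[OF g0(2)[unfolded S_def] g1(2)[unfolded S_def]] unfolding S_def .
    moreover have "(\<lambda>p. (x p - lin g0 p) + (y p - lin g1 p)) = (\<lambda>p. (x p + y p) - lin (\<lambda>i. g0 i + g1 i) p)"
      unfolding lin_add[OF g0(1) g1(1)] by (simp add: fun_eq_iff algebra_simps)
    ultimately have "\<phi> (cs (\<lambda>p. x p + y p)) = (\<lambda>i. g0 i + g1 i)"
      using phi_eq[OF xy finsupp_add[OF g0(1) g1(1)]] by simp
    thus ?thesis using phi_eq[OF x g0] phi_eq[OF y g1] by (simp add: BR_ops)
  qed
  have mul: "\<phi> (cs (x \<otimes>\<^bsub>B_ring \<alpha> n\<^esub> y)) = (\<lambda>i. \<phi> (cs x) i * \<phi> (cs y) i)" if x: "x \<in> T" and y: "y \<in> T" for x y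
  proof -
    obtain g0 where g0: "g0 \<in> finsupp (Lam \<alpha> n g)" "(\<lambda>p. x p - lin g0 p) \<in> S" using ex[OF x] by blast
    obtain g1 where g1: "g1 \<in> finsupp (Lam \<alpha> n g)" "(\<lambda>p. y p - lin g1 p) \<in> S" using ex[OF y] by blast
    have xy: "(\<lambda>p. x p * y p) \<in> T" using SS'_mult x Tc[OF y] unfolding T_def by blast
    have lc: "lin g0 \<in> carN \<alpha> n" using lin_SS'[OF g0(1)] unfolding SS'_def by blast
    have "(\<lambda>p. (x p - lin g0 p) * y p) \<in> S"
      using SS_mult[OF g0(2)[unfolded S_def] Tc[OF y]] unfolding S_def .
    moreover have "(\<lambda>p. (y p - lin g1 p) * lin g0 p) \<in> S"
      using SS_mult[OF g1(2)[unfolded S_def] lc] unfolding S_def .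
    ultimately have "(\<lambda>p. (x p - lin g0 p) * y p + (y p - lin g1 p) * lin g0 p) \<in> S"
      using SS_add unfolding S_def by blast
    moreover have "(\<lambda>p. (x p - lin g0 p) * y p + (y p - lin g1 p) * lin g0 p) = (\<lambda>p. x p * y p - lin (\<lambda>i. g0 i * g1 i) p)"
      unfolding lin_mult[OF g0(1) g1(1)] by (simp add: fun_eq_iff algebra_simps)
    ultimately have "\<phi> (cs (\<lambda>p. x p * y p)) = (\<lambda>i. g0 i * g1 i)"
      using phi_eq[OF xy finsupp_mult[OF g0(1) g1(1)]] by simp
    thus ?thesis using phi_eq[OF x g0] phi_eq[OF y g1] by (simp add: BR_ops)
  qed
  have smul: "\<phi> (cs (falg_smult c x)) = (\<lambda>i. c * \<phi> (cs x) i)" if x: "x \<in> T" for x c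
  proof -
    obtain g0 where g0: "g0 \<in> finsupp (Lam \<alpha> n g)" "(\<lambda>p. x p - lin g0 p) \<in> S" using ex[OF x] by blast
    have xc: "(\<lambda>p. c * x p) \<in> T" using SS'_smult x unfolding T_def by blast
    have "(\<lambda>p. c * (x p - lin g0 p)) \<in> S"
      using SS_smult[OF g0(2)[unfolded S_def]] unfolding S_def .
    moreover have "(\<lambda>p. c * (x p - lin g0 p)) = (\<lambda>p. c * x p - lin (\<lambda>i. c * g0 i) p)"
      unfolding lin_smult[OF g0(1)] by (simp add: fun_eq_iff algebra_simps)
    ultimately have "\<phi> (cs (\<lambda>p. c * x p)) = (\<lambda>i. c * g0 i)"
      using phi_eq[OF xc finsupp_smult[OF g0(1)]] by simp
    thus ?thesis using phi_eq[OF x g0] by (simp add: falg_smult_def)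
  qed
  have SS_eq: "soc_seq (B_ring \<alpha> n :: ('o pt \<Rightarrow> 'k) ring) g = S" unfolding S_def by (rule soc_seq_SS[OF ga])
  have TT_eq: "socle_step (B_ring \<alpha> n :: ('o pt \<Rightarrow> 'k) ring) S = T" unfolding S_def T_def by (rule socle_step_SS[OF ga])
  have cs_eq': "(\<lambda>x. S +>\<^bsub>B_ring \<alpha> n\<^esub> x) = cs" unfolding cs_def coset_eq by simp
  show ?thesis unfolding layer_iso_def Let_def SS_eq TT_eq cs_eq'
    using bij add mul smul by blast
qed

end


lemma Nn_alpha: "0 < n \<Longrightarrow> Nn \<alpha> n \<alpha> = (\<lambda>k. [Inl k]) ` {..<n}"
proof
  show "Nn \<alpha> n \<alpha> \<subseteq> (\<lambda>k. [Inl k]) ` {..<n}"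
  proof
    fix q assume "q \<in> Nn \<alpha> n \<alpha>"
    hence q: "ndn \<alpha> n q = Some \<alpha>" unfolding Nn_def by simp
    then obtain i q' where qe: "q = i # q'" by (cases q) auto
    then obtain k where k: "i = Inl k" "k < n" "nd \<alpha> q' = Some \<alpha>" using ndn_Cons_Some q by blast
    have "q' = []"
    proof (rule ccontr)
      assume "q' \<noteq> []"
      then obtain j q'' where "q' = j # q''" by (cases q') auto
      hence "\<alpha> < \<alpha>" using nd_less k(3) by blast
      thus False by simp
    qed
    thus "q \<in> (\<lambda>k. [Inl k]) ` {..<n}" using qe k by simp
  qed
  show "(\<lambda>k. [Inl k]) ` {..<n} \<subseteq> Nn \<alpha> n \<alpha>"
    unfolding Nn_def using ndn_root by auto
qed

lemma Lam_nonempty: "0 < n \<Longrightarrow> g \<le> \<alpha> \<Longrightarrow> Lam \<alpha> n g \<noteq> {}"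
proof -
  assume n: "0 < n" and g: "g \<le> \<alpha>"
  obtain r where "nd \<alpha> r = Some g" using nd_reach[OF g] by blast
  hence "Inl 0 # r \<in> Nn \<alpha> n g" unfolding Nn_def using n by (simp add: ndn_Inl)
  thus ?thesis unfolding Lam_def by blast
qed

lemma Lam_countable:
  assumes "countable_ord \<alpha>"
  shows "countable (Lam \<alpha> n g)"
proof -
  have "Nn \<alpha> n g \<subseteq> lists (range Inl \<union> Inr ` {\<gamma>. \<gamma> < \<alpha>})"
  proof
    fix q assume "q \<in> Nn \<alpha> n g"
    hence q: "ndn \<alpha> n q = Some g" unfolding Nn_def by simp
    then obtain i q' where qe: "q = i # q'" by (cases q) auto
    then obtain k where k: "i = Inl k" "nd \<alpha> q' = Some g" using ndn_Cons_Some q by blast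
    show "q \<in> lists (range Inl \<union> Inr ` {\<gamma>. \<gamma> < \<alpha>})" using nd_set[OF k(2)] qe k by auto
  qed
  moreover have "countable (lists (range Inl \<union> Inr ` {\<gamma>. \<gamma> < \<alpha>}) :: (nat + 'a) list set)"
    using assms unfolding countable_ord_def by auto
  ultimately have "countable (Nn \<alpha> n g)" using countable_subset by blast
  thus ?thesis unfolding Lam_def by simp
qed

lemma Lam_card: "0 < n \<Longrightarrow> finite (Lam \<alpha> n \<alpha> :: ('o::wellorder pt \<Rightarrow> 'k::field) set) \<and> card (Lam \<alpha> n \<alpha> :: ('o pt \<Rightarrow> 'k) set) = n"
proof -
  assume n: "0 < n"
  have inj1: "inj_on (eN \<alpha> n :: 'o pt \<Rightarrow> 'o pt \<Rightarrow> 'k) (Nn \<alpha> n \<alpha>)" by (rule eN_inj)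
  have "card (Nn \<alpha> n \<alpha>) = n" unfolding Nn_alpha[OF n] by (simp add: card_image inj_on_def)
  moreover have "finite (Nn \<alpha> n \<alpha>)" unfolding Nn_alpha[OF n] by simp
  ultimately show ?thesis unfolding Lam_def using card_image[OF inj1] by simp
qed

theorem lemma6p6:
  fixes \<alpha> :: "'o::wellorder" and n :: nat
  assumes "0 < n"
  shows "in_RK (B_ring \<alpha> n :: ('o pt \<Rightarrow> 'k::field) ring) falg_smult \<alpha>
       \<and> top_layer_dim (B_ring \<alpha> n :: ('o pt \<Rightarrow> 'k::field) ring) falg_smult \<alpha> n
       \<and> (countable_ord \<alpha> \<longrightarrow> countable_type (B_ring \<alpha> n :: ('o pt \<Rightarrow> 'k::field) ring) falg_smult \<alpha>)"
proof -
  have ll: "loewy_length_succ (B_ring \<alpha> n :: ('o pt \<Rightarrow> 'k) ring) \<alpha>"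
    unfolding loewy_length_succ_def
  proof
    have e1: "soc_seq (B_ring \<alpha> n :: ('o pt \<Rightarrow> 'k) ring) \<alpha> = SS \<alpha> n \<alpha>" by (rule soc_seq_SS[OF order_refl])
    have e2: "socle_step (B_ring \<alpha> n :: ('o pt \<Rightarrow> 'k) ring) (SS \<alpha> n \<alpha>) = SS' \<alpha> n \<alpha>" by (rule socle_step_SS[OF order_refl])
    have e3: "(SS' \<alpha> n \<alpha> :: ('o pt \<Rightarrow> 'k) set) = carN \<alpha> n" by (rule SS'_alpha)
    show "socle_step (B_ring \<alpha> n :: ('o pt \<Rightarrow> 'k) ring) (soc_seq (B_ring \<alpha> n) \<alpha>) = carrier (B_ring \<alpha> n)"
      by (simp add: e1 e2 e3 BR_ops)
    have "[Inl 0] \<in> Nn \<alpha> n \<alpha>" unfolding Nn_def using ndn_root assms by simp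
    hence "(eN \<alpha> n [Inl 0] :: 'o pt \<Rightarrow> 'k) \<notin> SS \<alpha> n \<alpha>" by (rule eN_notSS)
    moreover have "(eN \<alpha> n [Inl 0] :: 'o pt \<Rightarrow> 'k) \<in> carN \<alpha> n" by (rule eN_car)
    ultimately show "soc_seq (B_ring \<alpha> n :: ('o pt \<Rightarrow> 'k) ring) \<alpha> \<noteq> carrier (B_ring \<alpha> n)"
      using e1 by (auto simp: BR_ops)
  qed
  have lay: "(Lam \<alpha> n \<beta> :: ('o pt \<Rightarrow> 'k) set) \<noteq> {} \<and> layer_iso (B_ring \<alpha> n :: ('o pt \<Rightarrow> 'k) ring) falg_smult \<beta> (Lam \<alpha> n \<beta>)"
    if b: "\<beta> \<le> \<alpha>" for \<beta>
  proof
    show "(Lam \<alpha> n \<beta> :: ('o pt \<Rightarrow> 'k) set) \<noteq> {}" by (rule Lam_nonempty[OF assms b])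
    show "layer_iso (B_ring \<alpha> n :: ('o pt \<Rightarrow> 'k) ring) falg_smult \<beta> (Lam \<alpha> n \<beta>)" by (rule layer_SS[OF b])
  qed
  have "in_RK (B_ring \<alpha> n :: ('o pt \<Rightarrow> 'k) ring) falg_smult \<alpha>"
    unfolding in_RK_def
  proof (intro conjI allI impI)
    show "kalg (B_ring \<alpha> n :: ('o pt \<Rightarrow> 'k) ring) falg_smult" by (rule BR_kalg)
    show "vn_regular (B_ring \<alpha> n :: ('o pt \<Rightarrow> 'k) ring)" by (rule BR_vn)
    show "loewy_length_succ (B_ring \<alpha> n :: ('o pt \<Rightarrow> 'k) ring) \<alpha>" by (rule ll)
    fix \<beta> assume "\<beta> \<le> \<alpha>"
    thus "\<exists>\<Lambda>. \<Lambda> \<noteq> {} \<and> layer_iso (B_ring \<alpha> n :: ('o pt \<Rightarrow> 'k) ring) falg_smult \<beta> \<Lambda>"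
      using lay by blast
  qed
  moreover have "top_layer_dim (B_ring \<alpha> n :: ('o pt \<Rightarrow> 'k) ring) falg_smult \<alpha> n"
  proof -
    have "finite (Lam \<alpha> n \<alpha> :: ('o pt \<Rightarrow> 'k) set) \<and> card (Lam \<alpha> n \<alpha> :: ('o pt \<Rightarrow> 'k) set) = n"
      by (rule Lam_card[OF assms])
    moreover have "layer_iso (B_ring \<alpha> n :: ('o pt \<Rightarrow> 'k) ring) falg_smult \<alpha> (Lam \<alpha> n \<alpha>)"
      by (rule layer_SS[OF order_refl])
    ultimately show ?thesis unfolding top_layer_dim_def by blast
  qed
  moreover have "countable_ord \<alpha> \<longrightarrow> countable_type (B_ring \<alpha> n :: ('o pt \<Rightarrow> 'k) ring) falg_smult \<alpha>"
  proof
    assume c: "countable_ord \<alpha>"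
    show "countable_type (B_ring \<alpha> n :: ('o pt \<Rightarrow> 'k) ring) falg_smult \<alpha>"
      unfolding countable_type_def
    proof (intro conjI allI impI)
      show "countable_ord \<alpha>" by (rule c)
      fix \<beta> assume b: "\<beta> \<le> \<alpha>"
      have "countable (Lam \<alpha> n \<beta> :: ('o pt \<Rightarrow> 'k) set)" by (rule Lam_countable[OF c])
      thus "\<exists>\<Lambda>. countable \<Lambda> \<and> \<Lambda> \<noteq> {} \<and> layer_iso (B_ring \<alpha> n :: ('o pt \<Rightarrow> 'k) ring) falg_smult \<beta> \<Lambda>"
        using lay[OF b] by blast
    qed
  qed
  ultimately show ?thesis by blast
qed


end
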